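(* Let $n$ be a positive integer, $1\le k\le n$, $w\in\mathfrak S_n$, and let $R$ be a consistent subset of $\mathrm{Inv}_{k+1}(w)$ (i.e. $R\in\mathcal C_w(n,k+1)$). Then the directed graph $G_R$ is acyclic.
   Context: $\mathfrak S_n$ is the symmetric group on $[n]$. $\binom{[n]}{m}$ is the set of $m$-subsets of $[n]$ written $[x_1,\dots,x_m]$ with $x_1<\dots<x_m$; $X_i$ is $X$ with $x_i$ removed; $P(X)=\{X_1,\dots,X_m\}$. A prefix of $P(X)$ is a set $\{X_m,\dots,X_i\}$ and a suffix a set $\{X_i,\dots,X_1\}$ (the empty set counts as both). $\mathrm{Inv}_m(w)=\{[x_1,\dots,x_m]\in\binom{[n]}{m}:w^{-1}(x_1)>\dots>w^{-1}(x_m)\}$. $X\in\binom{[n]}{m}$ is an $m$-quasi-inversion of $w$ if exactly one pair $[x_a,x_b]$, $a<b$, is not in $\mathrm{Inv}_2(w)$. The quasi-inversion relations on $\mathrm{Inv}_m(w)$: whenever $X\in\binom{[n]}{m+1}$ is a quasi-inversion with $P(X)\cap\mathrm{Inv}_m(w)=\{X_i,X_{i+1}\}$, $X_i<X_{i+1}$ if $m-i$ is odd and $X_{i+1}<X_i$ if $m-i$ is even; $\mathcal P_w(n,m)$ is $\mathrm{Inv}_m(w)$ with the reflexive-transitive closure of these. $R\subseteq\mathrm{Inv}_{k+1}(w)$ is consistent if it is a lower order ideal of $\mathcal P_w(n,k+1)$ and for every $X\in\mathrm{Inv}_{k+2}(w)$, $P(X)\cap R$ is a prefix or suffix of $P(X)$.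 The directed graph $G_R$ has vertex set $\mathrm{Inv}_k(w)$ and directed edges: $X\to Y$ whenever $X<Y$ is a quasi-inversion relation on $\mathrm{Inv}_k(w)$; $X_i\to X_{i+1}$ for all $1\le i\le k$ whenever $X\in R$; and $X_{i+1}\to X_i$ for all $1\le i\le k$ whenever $X\in\mathrm{Inv}_{k+1}(w)\setminus R$. *)

theory Defs
  imports "HOL-Combinatorics.Permutations"
begin

definition subsets :: "nat \<Rightarrow> nat \<Rightarrow> nat set set" where
  "subsets n m = {X. X \<subseteq> {1..n} \<and> card X = m}"

text \<open>x_i, the i-th smallest element (1-indexed), and X_i = X with x_i removed.\<close>
definition elt :: "nat set \<Rightarrow> nat \<Rightarrow> nat" where
  "elt X i = sorted_list_of_set X ! (i - 1)"

definition del :: "nat set \<Rightarrow> nat \<Rightarrow> nat set" where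
  "del X i = X - {elt X i}"

definition Inv :: "nat \<Rightarrow> nat \<Rightarrow> (nat \<Rightarrow> nat) \<Rightarrow> nat set set" where
  "Inv n m w = {X \<in> subsets n m. \<forall>a\<in>X. \<forall>b\<in>X. a < b \<longrightarrow> inv w b < inv w a}"

definition quasi_inv :: "(nat \<Rightarrow> nat) \<Rightarrow> nat set \<Rightarrow> bool" where
  "quasi_inv w X \<longleftrightarrow> card {(a, b). a \<in> X \<and> b \<in> X \<and> a < b \<and> \<not> (inv w b < inv w a)} = 1"

text \<open>Quasi-inversion relations on Inv_m(w), as pairs (Y, Z) meaning Y < Z.\<close>
definition qrel :: "nat \<Rightarrow> nat \<Rightarrow> (nat \<Rightarrow> nat) \<Rightarrow> (nat set \<times> nat set) set" where
  "qrel n m w = {(Y, Z). \<exists>X i. X \<in> subsets n (m + 1) \<and> quasi_inv w X \<and> 1 \<le> i \<and> i \<le> m \<and>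
      {del X j | j. 1 \<le> j \<and> j \<le> m + 1} \<inter> Inv n m w = {del X i, del X (i + 1)} \<and>
      (if odd (m - i) then (Y, Z) = (del X i, del X (i + 1)) else (Y, Z) = (del X (i + 1), del X i))}"

definition Pleq :: "nat \<Rightarrow> nat \<Rightarrow> (nat \<Rightarrow> nat) \<Rightarrow> nat set \<Rightarrow> nat set \<Rightarrow> bool" where
  "Pleq n m w Y Z \<longleftrightarrow> Y \<in> Inv n m w \<and> Z \<in> Inv n m w \<and> (Y, Z) \<in> (qrel n m w)\<^sup>*"

definition is_prefix :: "nat set \<Rightarrow> nat set set \<Rightarrow> bool" where
  "is_prefix X S \<longleftrightarrow> (\<exists>i. 1 \<le> i \<and> i \<le> card X + 1 \<and> S = {del X j | j. i \<le> j \<and> j \<le> card X})"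

definition is_suffix :: "nat set \<Rightarrow> nat set set \<Rightarrow> bool" where
  "is_suffix X S \<longleftrightarrow> (\<exists>i. i \<le> card X \<and> S = {del X j | j. 1 \<le> j \<and> j \<le> i})"

definition Pset :: "nat set \<Rightarrow> nat set set" where
  "Pset X = {del X j | j. 1 \<le> j \<and> j \<le> card X}"

definition consistent :: "nat \<Rightarrow> nat \<Rightarrow> (nat \<Rightarrow> nat) \<Rightarrow> nat set set \<Rightarrow> bool" where
  "consistent n k w R \<longleftrightarrow>
     R \<subseteq> Inv n (k + 1) w \<and>
     (\<forall>Y Z. Pleq n (k + 1) w Y Z \<and> Z \<in> R \<longrightarrow> Y \<in> R) \<and>
     (\<forall>X \<in> Inv n (k + 2) w. is_prefix X (Pset X \<inter> R) \<or> is_suffix X (Pset X \<inter> R))"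

definition GR_edges :: "nat \<Rightarrow> nat \<Rightarrow> (nat \<Rightarrow> nat) \<Rightarrow> nat set set \<Rightarrow> (nat set \<times> nat set) set" where
  "GR_edges n k w R =
     {(Y, Z). Pleq n k w Y Z \<and> (Y, Z) \<in> qrel n k w}
     \<union> {(del X i, del X (i + 1)) | X i. X \<in> R \<and> 1 \<le> i \<and> i \<le> k}
     \<union> {(del X (i + 1), del X i) | X i. X \<in> Inv n (k + 1) w - R \<and> 1 \<le> i \<and> i \<le> k}"

end

theory Submission
  imports Defs
begin


lemma slos:
  assumes "finite X"
  shows "set (sorted_list_of_set X) = X" "length (sorted_list_of_set X) = card X"
    "sorted_wrt (<) (sorted_list_of_set X)"
  using assms by simp_all

lemma elt_in: "finite X \<Longrightarrow> 1 \<le> i \<Longrightarrow> i \<le> card X \<Longrightarrow> elt X i \<in> X"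
proof -
  assume a: "finite X" "1 \<le> i" "i \<le> card X"
  then have "i - 1 < length (sorted_list_of_set X)" by simp
  then have "sorted_list_of_set X ! (i - 1) \<in> set (sorted_list_of_set X)" by (rule nth_mem)
  then show ?thesis using a by (simp add: elt_def)
qed

lemma elt_mono: "finite X \<Longrightarrow> 1 \<le> i \<Longrightarrow> i < j \<Longrightarrow> j \<le> card X \<Longrightarrow> elt X i < elt X j"
proof -
  assume a: "finite X" "1 \<le> i" "i < j" "j \<le> card X"
  have s: "sorted_wrt (<) (sorted_list_of_set X)" using a by simp
  have "i - 1 < j - 1" "j - 1 < length (sorted_list_of_set X)" using a by auto
  then have "sorted_list_of_set X ! (i - 1) < sorted_list_of_set X ! (j - 1)"
    using sorted_wrt_nth_less[OF s] by blast
  then show ?thesis by (simp add: elt_def)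
qed

lemma elt_inj: "finite X \<Longrightarrow> 1 \<le> i \<Longrightarrow> i \<le> card X \<Longrightarrow> 1 \<le> j \<Longrightarrow> j \<le> card X
   \<Longrightarrow> elt X i = elt X j \<Longrightarrow> i = j"
  by (metis elt_mono less_irrefl linorder_neqE_nat)

lemma elt_surj: "finite X \<Longrightarrow> x \<in> X \<Longrightarrow> \<exists>i. 1 \<le> i \<and> i \<le> card X \<and> elt X i = x"
proof -
  assume f: "finite X" and x: "x \<in> X"
  then have "x \<in> set (sorted_list_of_set X)" by simp
  then obtain j where j: "j < length (sorted_list_of_set X)" "sorted_list_of_set X ! j = x"
    by (metis in_set_conv_nth)
  have "1 \<le> Suc j \<and> Suc j \<le> card X \<and> elt X (Suc j) = x"
    using j f by (simp add: elt_def)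
  thus ?thesis by blast
qed

lemma del_sub: "del X i \<subseteq> X" by (auto simp: del_def)

lemma del_card: "finite X \<Longrightarrow> 1 \<le> i \<Longrightarrow> i \<le> card X \<Longrightarrow> card (del X i) = card X - 1"
  by (simp add: del_def elt_in)

lemma del_inj: "finite X \<Longrightarrow> 1 \<le> i \<Longrightarrow> i \<le> card X \<Longrightarrow> 1 \<le> j \<Longrightarrow> j \<le> card X
   \<Longrightarrow> del X i = del X j \<Longrightarrow> i = j"
proof (rule ccontr)
  assume a: "finite X" "1 \<le> i" "i \<le> card X" "1 \<le> j" "j \<le> card X" "del X i = del X j" "i \<noteq> j"
  then have "elt X i \<noteq> elt X j" using elt_inj by blast
  then have "elt X i \<in> del X j" using a elt_in by (auto simp: del_def)
  then have "elt X i \<in> del X i" using a(6) by simp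
  then show False by (simp add: del_def)
qed

lemma del_union: "finite X \<Longrightarrow> 1 \<le> i \<Longrightarrow> i + 1 \<le> card X \<Longrightarrow> del X i \<union> del X (i+1) = X"
  unfolding del_def using elt_mono[of X i "i+1"] by auto

lemma slos_insert_min:
  assumes "finite X" "\<forall>x\<in>X. v < x"
  shows "sorted_list_of_set (insert v X) = v # sorted_list_of_set X"
proof -
  have m: "Min (insert v X) = v" using assms by (simp add: Min_insert2 less_imp_le)
  have "insert v X - {v} = X" using assms by auto
  thus ?thesis using sorted_list_of_set_nonempty[of "insert v X"] m assms by simp
qed

lemma elt_insert_min:
  assumes "finite X" "\<forall>x\<in>X. v < x"
  shows "elt (insert v X) 1 = v" "1 \<le> j \<Longrightarrow> elt (insert v X) (Suc j) = elt X j"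
  using slos_insert_min[OF assms] by (auto simp: elt_def nth_Cons')

lemma del_insert_min:
  assumes "finite X" "\<forall>x\<in>X. v < x"
  shows "del (insert v X) 1 = X" "1 \<le> j \<Longrightarrow> j \<le> card X \<Longrightarrow> del (insert v X) (Suc j) = insert v (del X j)"
proof -
  have nv: "v \<notin> X" using assms by auto
  show "del (insert v X) 1 = X" using elt_insert_min(1)[OF assms] nv by (simp add: del_def)
  assume "1 \<le> j" "j \<le> card X"
  then have "elt X j \<in> X" "elt X j \<noteq> v" using elt_in[OF assms(1)] nv by auto
  then show "del (insert v X) (Suc j) = insert v (del X j)"
    using elt_insert_min(2)[OF assms \<open>1 \<le> j\<close>] by (auto simp: del_def)
qed




definition subsetsV :: "nat set \<Rightarrow> nat \<Rightarrow> nat set set" where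
  "subsetsV V m = {X. X \<subseteq> V \<and> card X = m}"

definition InvV :: "nat set \<Rightarrow> nat \<Rightarrow> (nat \<Rightarrow> nat) \<Rightarrow> nat set set" where
  "InvV V m p = {X \<in> subsetsV V m. \<forall>a\<in>X. \<forall>b\<in>X. a < b \<longrightarrow> p b < p a}"

definition qinv :: "(nat \<Rightarrow> nat) \<Rightarrow> nat set \<Rightarrow> bool" where
  "qinv p X \<longleftrightarrow> card {(a, b). a \<in> X \<and> b \<in> X \<and> a < b \<and> \<not> (p b < p a)} = 1"

definition qrelV :: "nat set \<Rightarrow> nat \<Rightarrow> (nat \<Rightarrow> nat) \<Rightarrow> (nat set \<times> nat set) set" where
  "qrelV V m p = {(Y, Z). \<exists>X i. X \<in> subsetsV V (m + 1) \<and> qinv p X \<and> 1 \<le> i \<and> i \<le> m \<and>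
      {del X j | j. 1 \<le> j \<and> j \<le> m + 1} \<inter> InvV V m p = {del X i, del X (i + 1)} \<and>
      (if odd (m - i) then (Y, Z) = (del X i, del X (i + 1)) else (Y, Z) = (del X (i + 1), del X i))}"

definition PleqV :: "nat set \<Rightarrow> nat \<Rightarrow> (nat \<Rightarrow> nat) \<Rightarrow> nat set \<Rightarrow> nat set \<Rightarrow> bool" where
  "PleqV V m p Y Z \<longleftrightarrow> Y \<in> InvV V m p \<and> Z \<in> InvV V m p \<and> (Y, Z) \<in> (qrelV V m p)\<^sup>*"

definition consV :: "nat set \<Rightarrow> nat \<Rightarrow> (nat \<Rightarrow> nat) \<Rightarrow> nat set set \<Rightarrow> bool" where
  "consV V k p R \<longleftrightarrow>
     R \<subseteq> InvV V (k + 1) p \<and>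
     (\<forall>Y Z. PleqV V (k + 1) p Y Z \<and> Z \<in> R \<longrightarrow> Y \<in> R) \<and>
     (\<forall>X \<in> InvV V (k + 2) p. is_prefix X (Pset X \<inter> R) \<or> is_suffix X (Pset X \<inter> R))"

definition GRV :: "nat set \<Rightarrow> nat \<Rightarrow> (nat \<Rightarrow> nat) \<Rightarrow> nat set set \<Rightarrow> (nat set \<times> nat set) set" where
  "GRV V k p R =
     {(Y, Z). PleqV V k p Y Z \<and> (Y, Z) \<in> qrelV V k p}
     \<union> {(del X i, del X (i + 1)) | X i. X \<in> R \<and> 1 \<le> i \<and> i \<le> k}
     \<union> {(del X (i + 1), del X i) | X i. X \<in> InvV V (k + 1) p - R \<and> 1 \<le> i \<and> i \<le> k}"

lemma inst_subsets: "subsets n m = subsetsV {1..n} m"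
  by (simp add: subsets_def subsetsV_def)
lemma inst_Inv: "Inv n m w = InvV {1..n} m (inv w)"
  by (simp add: Inv_def InvV_def inst_subsets)
lemma inst_quasi: "quasi_inv w = qinv (inv w)"
  by (simp add: quasi_inv_def qinv_def fun_eq_iff)
lemma inst_qrel: "qrel n m w = qrelV {1..n} m (inv w)"
  by (simp add: qrel_def qrelV_def inst_subsets inst_Inv inst_quasi)
lemma inst_Pleq: "Pleq n m w = PleqV {1..n} m (inv w)"
  by (simp add: Pleq_def PleqV_def inst_qrel inst_Inv fun_eq_iff)
lemma inst_cons: "consistent n k w R = consV {1..n} k (inv w) R"
  by (simp add: consistent_def consV_def inst_Pleq inst_Inv)
lemma inst_GR: "GR_edges n k w R = GRV {1..n} k (inv w) R"
  by (simp add: GR_edges_def GRV_def inst_Pleq inst_qrel inst_Inv)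

abbreviation good :: "(nat \<Rightarrow> nat) \<Rightarrow> nat set \<Rightarrow> bool" where
  "good p X \<equiv> \<forall>a\<in>X. \<forall>b\<in>X. a < b \<longrightarrow> p b < p a"

lemma InvV_iff: "X \<in> InvV V m p \<longleftrightarrow> X \<subseteq> V \<and> card X = m \<and> good p X"
  by (simp add: InvV_def subsetsV_def)

lemma inv_sub: "Y \<subseteq> W \<Longrightarrow> W \<subseteq> V \<Longrightarrow> Y \<in> InvV W m p \<longleftrightarrow> Y \<in> InvV V m p"
  by (auto simp: InvV_iff)

lemma facets_inv_sub:
  assumes "X \<subseteq> W" "W \<subseteq> V"
  shows "{del X j | j. 1 \<le> j \<and> j \<le> m'} \<inter> InvV W m p = {del X j | j. 1 \<le> j \<and> j \<le> m'} \<inter> InvV V m p"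
proof -
  have h: "\<And>j. (del X j \<in> InvV W m p) = (del X j \<in> InvV V m p)"
    using inv_sub[OF _ assms(2)] del_sub[of X] assms(1) by blast
  show ?thesis using h by blast
qed

lemma qrel_inv: "(Y, Z) \<in> qrelV V m p \<Longrightarrow> Y \<in> InvV V m p \<and> Z \<in> InvV V m p"
  unfolding qrelV_def by (auto split: if_splits)

lemma GRV_alt: "GRV V k p R = qrelV V k p
     \<union> {(del X i, del X (i + 1)) | X i. X \<in> R \<and> 1 \<le> i \<and> i \<le> k}
     \<union> {(del X (i + 1), del X i) | X i. X \<in> InvV V (k + 1) p - R \<and> 1 \<le> i \<and> i \<le> k}"
  unfolding GRV_def PleqV_def using qrel_inv by blast

lemma edge_cases:
  assumes "(Y, Z) \<in> GRV V k p R" "R \<subseteq> InvV V (k + 1) p"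
  obtains (R) X i where "X \<in> InvV V (k + 1) p" "X \<in> R" "1 \<le> i" "i \<le> k" "Y = del X i" "Z = del X (i + 1)"
  | (N) X i where "X \<in> InvV V (k + 1) p" "X \<notin> R" "1 \<le> i" "i \<le> k" "Y = del X (i + 1)" "Z = del X i"
  | (Q) X i where "X \<subseteq> V" "card X = k + 1" "qinv p X" "1 \<le> i" "i \<le> k"
      "{del X j | j. 1 \<le> j \<and> j \<le> k + 1} \<inter> InvV V k p = {del X i, del X (i + 1)}"
      "if odd (k - i) then Y = del X i \<and> Z = del X (i + 1) else Y = del X (i + 1) \<and> Z = del X i"
proof -
  from assms(1) consider (a) "(Y, Z) \<in> qrelV V k p"
    | (b) "(Y, Z) \<in> {(del X i, del X (i + 1)) | X i. X \<in> R \<and> 1 \<le> i \<and> i \<le> k}"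
    | (c) "(Y, Z) \<in> {(del X (i + 1), del X i) | X i. X \<in> InvV V (k + 1) p - R \<and> 1 \<le> i \<and> i \<le> k}"
    unfolding GRV_alt by blast
  then show ?thesis
  proof cases
    case a
    then obtain X i where X: "X \<in> subsetsV V (k + 1)" "qinv p X" "1 \<le> i" "i \<le> k"
      "{del X j | j. 1 \<le> j \<and> j \<le> k + 1} \<inter> InvV V k p = {del X i, del X (i + 1)}"
      "if odd (k - i) then (Y, Z) = (del X i, del X (i + 1)) else (Y, Z) = (del X (i + 1), del X i)"
      unfolding qrelV_def mem_Collect_eq case_prod_conv by blast
    have "if odd (k - i) then Y = del X i \<and> Z = del X (i + 1) else Y = del X (i + 1) \<and> Z = del X i"
    proof (cases "odd (k - i)")
      case True
      have "(Y, Z) = (del X i, del X (i + 1))" using X(6) unfolding if_P[OF True] .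
      then show ?thesis unfolding if_P[OF True] by simp
    next
      case False
      have "(Y, Z) = (del X (i + 1), del X i)" using X(6) unfolding if_not_P[OF False] .
      then show ?thesis unfolding if_not_P[OF False] by simp
    qed
    moreover have "X \<subseteq> V" "card X = k + 1" using X(1) by (simp_all add: subsetsV_def)
    ultimately show ?thesis using X(2-5) by (rule_tac Q[of X i]) simp_all
  next
    case b
    then obtain X i where X: "X \<in> R" "1 \<le> i" "i \<le> k" "Y = del X i" "Z = del X (i + 1)" by blast
    then show ?thesis using assms(2) by (rule_tac R[of X i]) auto
  next
    case c
    then obtain X i where X: "X \<in> InvV V (k + 1) p" "X \<notin> R" "1 \<le> i" "i \<le> k" "Y = del X (i + 1)" "Z = del X i" by blast
    then show ?thesis by (rule_tac N[of X i]) auto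
  qed
qed

lemma qinv_not_good: assumes "qinv p X" shows "\<not> good p X"
proof
  assume g: "good p X"
  have e: "{(a, b). a \<in> X \<and> b \<in> X \<and> a < b \<and> \<not> (p b < p a)} = {}" using g by auto
  from assms have "card {(a, b). a \<in> X \<and> b \<in> X \<and> a < b \<and> \<not> (p b < p a)} = 1"
    by (simp add: qinv_def)
  then show False unfolding e by simp
qed

lemma quasi_intro:
  assumes "a \<in> X" "b \<in> X" "a < b" "\<not> p b < p a"
    "\<And>a' b'. a' \<in> X \<Longrightarrow> b' \<in> X \<Longrightarrow> a' < b' \<Longrightarrow> (a', b') \<noteq> (a, b) \<Longrightarrow> p b' < p a'"
  shows "qinv p X"
proof -
  have "{(a', b'). a' \<in> X \<and> b' \<in> X \<and> a' < b' \<and> \<not> (p b' < p a')} = {(a, b)}"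
    using assms by auto
  then show ?thesis by (simp add: qinv_def)
qed

lemma quasi_struct:
  assumes "finite X" "card X = m + 1" "qinv p X" "1 \<le> i" "i \<le> m"
    "good p (del X i)" "good p (del X (i + 1))"
  shows "\<not> p (elt X (i + 1)) < p (elt X i)"
    "\<And>a b. a \<in> X \<Longrightarrow> b \<in> X \<Longrightarrow> a < b \<Longrightarrow> (a, b) \<noteq> (elt X i, elt X (i + 1)) \<Longrightarrow> p b < p a"
proof -
  have lt: "elt X i < elt X (i + 1)" using elt_mono[of X i "i+1"] assms by simp
  show oth: "p b < p a" if h: "a \<in> X" "b \<in> X" "a < b" "(a, b) \<noteq> (elt X i, elt X (i + 1))" for a b
  proof (cases "a \<noteq> elt X i \<and> b \<noteq> elt X i")
    case True
    then show ?thesis using assms(6) h by (auto simp: del_def)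
  next
    case False
    show ?thesis
    proof (cases "a \<noteq> elt X (i+1) \<and> b \<noteq> elt X (i+1)")
      case True
      then show ?thesis using assms(7) h by (auto simp: del_def)
    next
      case False2: False
      from False False2 h lt show ?thesis by auto
    qed
  qed
  show "\<not> p (elt X (i + 1)) < p (elt X i)"
  proof
    assume "p (elt X (i + 1)) < p (elt X i)"
    then have "good p X" using oth by blast
    then show False using qinv_not_good[OF assms(3)] by blast
  qed
qed

lemma ps_index:
  assumes "finite X" "card X = m" "is_prefix X (Pset X \<inter> R) \<or> is_suffix X (Pset X \<inter> R)"
  shows "(\<exists>s. \<forall>j. 1 \<le> j \<longrightarrow> j \<le> m \<longrightarrow> (del X j \<in> R \<longleftrightarrow> s \<le> j))
       \<or> (\<exists>s. \<forall>j. 1 \<le> j \<longrightarrow> j \<le> m \<longrightarrow> (del X j \<in> R \<longleftrightarrow> j \<le> s))"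
  using assms(3)
proof
  assume "is_prefix X (Pset X \<inter> R)"
  then obtain s where s: "Pset X \<inter> R = {del X j | j. s \<le> j \<and> j \<le> card X}" and s1: "1 \<le> s"
    by (auto simp: is_prefix_def)
  have "del X j \<in> R \<longleftrightarrow> s \<le> j" if "1 \<le> j" "j \<le> m" for j
  proof
    assume "del X j \<in> R"
    then have "del X j \<in> Pset X \<inter> R" using that assms(2) by (auto simp: Pset_def)
    then obtain j' where "s \<le> j'" "j' \<le> card X" "del X j = del X j'" using s by auto
    moreover have "1 \<le> j'" using s1 \<open>s \<le> j'\<close> by simp
    ultimately show "s \<le> j" using del_inj[OF assms(1), of j j'] that assms(2) by simp
  next
    assume "s \<le> j"
    then have "del X j \<in> Pset X \<inter> R" using s that assms(2) by auto
    then show "del X j \<in> R" by simp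
  qed
  then show ?thesis by blast
next
  assume "is_suffix X (Pset X \<inter> R)"
  then obtain s where s: "Pset X \<inter> R = {del X j | j. 1 \<le> j \<and> j \<le> s}" "s \<le> card X"
    by (auto simp: is_suffix_def)
  have "del X j \<in> R \<longleftrightarrow> j \<le> s" if "1 \<le> j" "j \<le> m" for j
  proof
    assume "del X j \<in> R"
    then have "del X j \<in> Pset X \<inter> R" using that assms(2) by (auto simp: Pset_def)
    then obtain j' where "1 \<le> j'" "j' \<le> s" "del X j = del X j'" using s by auto
    then show "j \<le> s" using del_inj[OF assms(1), of j j'] that assms(2) s(2) by simp
  next
    assume "j \<le> s"
    then have "del X j \<in> Pset X \<inter> R" using s that assms(2) by auto
    then show "del X j \<in> R" by simp
  qed
  then show ?thesis by blast
qed

lemma ps_conv_prefix: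
  assumes "finite X" "card X = m" "\<forall>j. 1 \<le> j \<longrightarrow> j \<le> m \<longrightarrow> (del X j \<in> R \<longleftrightarrow> s \<le> j)"
  shows "is_prefix X (Pset X \<inter> R)"
proof -
  define s' where "s' = min (max s 1) (m + 1)"
  have "Pset X \<inter> R = {del X j | j. s' \<le> j \<and> j \<le> card X}"
  proof (intro equalityI subsetI)
    fix Y assume "Y \<in> Pset X \<inter> R"
    then obtain j where j: "1 \<le> j" "j \<le> m" "Y = del X j" "del X j \<in> R" using assms(2) by (auto simp: Pset_def)
    then have "s \<le> j" using assms(3) by auto
    then show "Y \<in> {del X j | j. s' \<le> j \<and> j \<le> card X}" using j assms(2) unfolding s'_def by auto
  next
    fix Y assume "Y \<in> {del X j | j. s' \<le> j \<and> j \<le> card X}"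
    then obtain j where j: "s' \<le> j" "j \<le> m" "Y = del X j" using assms(2) by auto
    then have "1 \<le> j" "s \<le> j" unfolding s'_def by auto
    then show "Y \<in> Pset X \<inter> R" using j assms by (auto simp: Pset_def)
  qed
  moreover have "1 \<le> s'" "s' \<le> card X + 1" using assms(2) unfolding s'_def by auto
  ultimately show ?thesis unfolding is_prefix_def by blast
qed

lemma ps_conv_suffix:
  assumes "finite X" "card X = m" "\<forall>j. 1 \<le> j \<longrightarrow> j \<le> m \<longrightarrow> (del X j \<in> R \<longleftrightarrow> j \<le> s)"
  shows "is_suffix X (Pset X \<inter> R)"
proof -
  define s' where "s' = min s m"
  have "Pset X \<inter> R = {del X j | j. 1 \<le> j \<and> j \<le> s'}"
  proof (intro equalityI subsetI)
    fix Y assume "Y \<in> Pset X \<inter> R"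
    then obtain j where j: "1 \<le> j" "j \<le> m" "Y = del X j" "del X j \<in> R" using assms(2) by (auto simp: Pset_def)
    then have "j \<le> s" using assms(3) by auto
    then show "Y \<in> {del X j | j. 1 \<le> j \<and> j \<le> s'}" using j unfolding s'_def by auto
  next
    fix Y assume "Y \<in> {del X j | j. 1 \<le> j \<and> j \<le> s'}"
    then obtain j where j: "1 \<le> j" "j \<le> s'" "Y = del X j" by auto
    then have "j \<le> m" "j \<le> s" unfolding s'_def by auto
    then show "Y \<in> Pset X \<inter> R" using j assms by (auto simp: Pset_def)
  qed
  moreover have "s' \<le> card X" using assms(2) unfolding s'_def by auto
  ultimately show ?thesis unfolding is_suffix_def by blast
qed

lemma cons_mono:
  assumes "consV V k p R" "Xv \<in> InvV V (k + 2) p" "1 \<le> j" "j + 1 \<le> k + 2"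
  shows "del Xv 1 \<in> R \<Longrightarrow> del Xv (j + 1) \<in> R \<Longrightarrow> del Xv j \<in> R"
    and "del Xv 1 \<notin> R \<Longrightarrow> del Xv j \<in> R \<Longrightarrow> del Xv (j + 1) \<in> R"
proof -
  have c: "card Xv = k + 2" and f: "finite Xv" using assms(2) by (auto simp: InvV_iff intro: card_ge_0_finite)
  have "is_prefix Xv (Pset Xv \<inter> R) \<or> is_suffix Xv (Pset Xv \<inter> R)"
    using assms(1,2) by (simp add: consV_def)
  from ps_index[OF f c this]
  have P: "(\<exists>s. \<forall>j. 1 \<le> j \<longrightarrow> j \<le> k + 2 \<longrightarrow> (del Xv j \<in> R \<longleftrightarrow> s \<le> j))
       \<or> (\<exists>s. \<forall>j. 1 \<le> j \<longrightarrow> j \<le> k + 2 \<longrightarrow> (del Xv j \<in> R \<longleftrightarrow> j \<le> s))" .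
  show "del Xv 1 \<in> R \<Longrightarrow> del Xv (j + 1) \<in> R \<Longrightarrow> del Xv j \<in> R"
  proof -
    assume h: "del Xv 1 \<in> R" "del Xv (j + 1) \<in> R"
    from P show ?thesis
    proof
      assume "\<exists>s. \<forall>j. 1 \<le> j \<longrightarrow> j \<le> k + 2 \<longrightarrow> (del Xv j \<in> R \<longleftrightarrow> s \<le> j)"
      then obtain s where s: "\<forall>j. 1 \<le> j \<longrightarrow> j \<le> k + 2 \<longrightarrow> (del Xv j \<in> R \<longleftrightarrow> s \<le> j)" by blast
      then have "s \<le> 1" using h(1) by auto
      then show ?thesis using s assms(3,4) by auto
    next
      assume "\<exists>s. \<forall>j. 1 \<le> j \<longrightarrow> j \<le> k + 2 \<longrightarrow> (del Xv j \<in> R \<longleftrightarrow> j \<le> s)"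
      then obtain s where s: "\<forall>j. 1 \<le> j \<longrightarrow> j \<le> k + 2 \<longrightarrow> (del Xv j \<in> R \<longleftrightarrow> j \<le> s)" by blast
      then have "j + 1 \<le> s" using h(2) assms(3,4) by auto
      then show ?thesis using s assms(3,4) by auto
    qed
  qed
  show "del Xv 1 \<notin> R \<Longrightarrow> del Xv j \<in> R \<Longrightarrow> del Xv (j + 1) \<in> R"
  proof -
    assume h: "del Xv 1 \<notin> R" "del Xv j \<in> R"
    from P show ?thesis
    proof
      assume "\<exists>s. \<forall>j. 1 \<le> j \<longrightarrow> j \<le> k + 2 \<longrightarrow> (del Xv j \<in> R \<longleftrightarrow> s \<le> j)"
      then obtain s where s: "\<forall>j. 1 \<le> j \<longrightarrow> j \<le> k + 2 \<longrightarrow> (del Xv j \<in> R \<longleftrightarrow> s \<le> j)" by blast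
      then have "s \<le> j" using h(2) assms(3,4) by auto
      then show ?thesis using s assms(3,4) by auto
    next
      assume "\<exists>s. \<forall>j. 1 \<le> j \<longrightarrow> j \<le> k + 2 \<longrightarrow> (del Xv j \<in> R \<longleftrightarrow> j \<le> s)"
      then obtain s where s: "\<forall>j. 1 \<le> j \<longrightarrow> j \<le> k + 2 \<longrightarrow> (del Xv j \<in> R \<longleftrightarrow> j \<le> s)" by blast
      then have "\<not> 1 \<le> s" using h(1) by auto
      then show ?thesis using s h(2) assms(3,4) by auto
    qed
  qed
qed

lemma acyclic_layers:
  fixes L :: "'a \<Rightarrow> nat"
  assumes "\<And>x y. (x, y) \<in> E \<Longrightarrow> L x \<le> L y"
    "\<And>l. acyclic {(x, y). (x, y) \<in> E \<and> L x = l \<and> L y = l}"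
  shows "acyclic E"
proof -
  have *: "L x \<le> L y \<and> (L x = L y \<longrightarrow> (x, y) \<in> {(a, b). (a, b) \<in> E \<and> L a = L x \<and> L b = L x}\<^sup>+)"
    if "(x, y) \<in> E\<^sup>+" for x y
    using that
  proof (induction rule: trancl_induct)
    case (base y)
    then show ?case using assms(1) by auto
  next
    case (step y z)
    have "L y \<le> L z" using assms(1) step.hyps(2) .
    then show ?case using step by (auto intro: trancl_into_trancl)
  qed
  show ?thesis unfolding acyclic_def
  proof
    fix x show "(x, x) \<notin> E\<^sup>+"
    proof
      assume "(x, x) \<in> E\<^sup>+"
      then have "(x, x) \<in> {(a, b). (a, b) \<in> E \<and> L a = L x \<and> L b = L x}\<^sup>+" using * by blast
      then show False using assms(2)[of "L x"] unfolding acyclic_def by blast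
    qed
  qed
qed

lemma acyclic_hom:
  assumes "acyclic E'" "\<And>x y. (x, y) \<in> E \<Longrightarrow> (f x, f y) \<in> E'"
  shows "acyclic E"
proof -
  have *: "(f x, f y) \<in> E'\<^sup>+" if "(x, y) \<in> E\<^sup>+" for x y
    using that
  proof (induction rule: trancl_induct)
    case (base y) then show ?case using assms(2) by blast
  next
    case (step y z) then show ?case using assms(2) by (meson trancl.trancl_into_trancl)
  qed
  show ?thesis using assms(1) * unfolding acyclic_def by blast
qed




lemma ins_inv:
  assumes "v \<in> V" "finite Y" "\<forall>y\<in>Y. v < y \<and> p y < p v"
  shows "insert v Y \<in> InvV V (Suc m) p \<longleftrightarrow> Y \<in> InvV V m p"
proof -
  have nv: "v \<notin> Y" using assms(3) by auto
  have c: "card (insert v Y) = Suc (card Y)" using nv assms(2) by simp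
  have g: "good p (insert v Y) \<longleftrightarrow> good p Y"
  proof
    assume "good p (insert v Y)" then show "good p Y" by blast
  next
    assume gY: "good p Y"
    show "good p (insert v Y)"
    proof (intro ballI impI)
      fix a b assume ab: "a \<in> insert v Y" "b \<in> insert v Y" "a < b"
      show "p b < p a"
      proof (cases "a = v")
        case True
        then have "b \<in> Y" using ab by auto
        then show ?thesis using True assms(3) by auto
      next
        case False
        then have aY: "a \<in> Y" using ab by auto
        then have "b \<noteq> v" using ab assms(3) by auto
        then show ?thesis using aY ab gY by auto
      qed
    qed
  qed
  show ?thesis using c g assms(1) by (auto simp: InvV_iff)
qed

lemma facet_mem:
  assumes "{del X j | j. 1 \<le> j \<and> j \<le> m'} \<inter> I = {del X i, del X (i + 1)}"
  shows "del X i \<in> I" "del X (i + 1) \<in> I"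
proof -
  have "del X i \<in> {del X j | j. 1 \<le> j \<and> j \<le> m'} \<inter> I" unfolding assms by simp
  then show "del X i \<in> I" by blast
  have "del X (i + 1) \<in> {del X j | j. 1 \<le> j \<and> j \<le> m'} \<inter> I" unfolding assms by simp
  then show "del X (i + 1) \<in> I" by blast
qed

lemma qrelI:
  assumes "X \<in> subsetsV V (m + 1)" "qinv p X" "1 \<le> i" "i \<le> m"
    "{del X j | j. 1 \<le> j \<and> j \<le> m + 1} \<inter> InvV V m p = {del X i, del X (i + 1)}"
    "if odd (m - i) then (Y, Z) = (del X i, del X (i + 1)) else (Y, Z) = (del X (i + 1), del X i)"
  shows "(Y, Z) \<in> qrelV V m p"
  unfolding qrelV_def mem_Collect_eq case_prod_conv using assms by blast

lemma lift_qrel: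
  assumes "finite X" "card X = k + 1" "X \<subseteq> V" "v \<in> V" "\<forall>x\<in>X. v < x \<and> p x < p v" "qinv p X"
    "1 \<le> i" "i \<le> k"
    "{del X j | j. 1 \<le> j \<and> j \<le> k + 1} \<inter> InvV V k p = {del X i, del X (i + 1)}"
  shows "(if odd (k - i) then (insert v (del X i), insert v (del X (i + 1)))
          else (insert v (del X (i + 1)), insert v (del X i))) \<in> qrelV V (k + 1) p"
proof -
  define Xv where "Xv = insert v X"
  have vX: "\<forall>x\<in>X. v < x" using assms(5) by auto
  have nv: "v \<notin> X" using vX by auto
  have fi: "del X i \<in> InvV V k p" "del X (i+1) \<in> InvV V k p" using facet_mem[OF assms(9)] by auto
  then have gi: "good p (del X i)" "good p (del X (i + 1))" by (auto simp: InvV_iff)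
  note qs = quasi_struct[OF assms(1,2,6,7,8) gi]
  have ain: "elt X i \<in> X" "elt X (i+1) \<in> X" using elt_in[OF assms(1)] assms(2,7,8) by auto
  have alt: "elt X i < elt X (i+1)" using elt_mono[OF assms(1)] assms(2,7,8) by auto
  have qv: "qinv p Xv" unfolding Xv_def
  proof (rule quasi_intro[OF _ _ alt qs(1)])
    show "elt X i \<in> insert v X" "elt X (i+1) \<in> insert v X" using ain by auto
    fix a' b' assume h: "a' \<in> insert v X" "b' \<in> insert v X" "a' < b'" "(a', b') \<noteq> (elt X i, elt X (i + 1))"
    show "p b' < p a'"
    proof (cases "a' = v")
      case True
      then have "b' \<in> X" using h by auto
      then show ?thesis using True assms(5) by auto
    next
      case False
      then have "a' \<in> X" using h by auto
      then have "b' \<in> X" using h vX by auto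
      then show ?thesis using qs(2) h \<open>a' \<in> X\<close> by auto
    qed
  qed
  have cv: "card Xv = k + 1 + 1" using nv assms(1,2) by (simp add: Xv_def)
  have sv: "Xv \<in> subsetsV V (k + 1 + 1)" using cv assms(3,4) by (simp add: subsetsV_def Xv_def)
  have d1: "del Xv 1 = X" using del_insert_min(1)[OF assms(1) vX] by (simp add: Xv_def)
  have dS: "del Xv (Suc j) = insert v (del X j)" if "1 \<le> j" "j \<le> k + 1" for j
    using del_insert_min(2)[OF assms(1) vX that(1)] that assms(2) by (simp add: Xv_def)
  have Xn: "X \<notin> InvV V (k + 1) p" using qinv_not_good[OF assms(6)] by (auto simp: InvV_iff)
  have insI: "insert v (del X j) \<in> InvV V (k + 1) p \<longleftrightarrow> del X j \<in> InvV V k p" for j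
  proof -
    have "finite (del X j)" using assms(1) del_sub[of X j] finite_subset by blast
    moreover have "\<forall>y\<in>del X j. v < y \<and> p y < p v" using assms(5) del_sub[of X j] by auto
    ultimately show ?thesis using ins_inv[OF assms(4)] by simp
  qed
  have pr: "del Xv (i + 1) = insert v (del X i)" "del Xv (i + 1 + 1) = insert v (del X (i + 1))"
    using dS[of i] dS[of "i+1"] assms(7,8) by auto
  have FE: "{del Xv j | j. 1 \<le> j \<and> j \<le> k + 1 + 1} \<inter> InvV V (k + 1) p = {del Xv (i + 1), del Xv (i + 1 + 1)}"
  proof (intro equalityI subsetI)
    fix S assume "S \<in> {del Xv j | j. 1 \<le> j \<and> j \<le> k + 1 + 1} \<inter> InvV V (k + 1) p"
    then obtain j where j: "1 \<le> j" "j \<le> k + 2" "S = del Xv j" "S \<in> InvV V (k + 1) p" by auto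
    show "S \<in> {del Xv (i + 1), del Xv (i + 1 + 1)}"
    proof (cases "j = 1")
      case True then show ?thesis using j d1 Xn by simp
    next
      case False
      then obtain j' where j': "j = Suc j'" "1 \<le> j'" "j' \<le> k + 1" using j by (cases j) auto
      then have "S = insert v (del X j')" using dS j by simp
      then have "del X j' \<in> InvV V k p" using insI j by simp
      then have "del X j' \<in> {del X j | j. 1 \<le> j \<and> j \<le> k + 1} \<inter> InvV V k p" using j' by auto
      then have "del X j' \<in> {del X i, del X (i + 1)}" by (simp only: assms(9))
      then show ?thesis using \<open>S = insert v (del X j')\<close> dS[of i] dS[of "i+1"] assms(7,8) by auto
    qed
  next
    fix S assume S: "S \<in> {del Xv (i + 1), del Xv (i + 1 + 1)}"
    have r1: "1 \<le> i + 1 \<and> i + 1 \<le> k + 1 + 1" "1 \<le> i + 1 + 1 \<and> i + 1 + 1 \<le> k + 1 + 1" using assms(7,8) by simp_all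
    have m1: "del Xv (i + 1) \<in> {del Xv j | j. 1 \<le> j \<and> j \<le> k + 1 + 1}" using r1(1) by blast
    have m2: "del Xv (i + 1 + 1) \<in> {del Xv j | j. 1 \<le> j \<and> j \<le> k + 1 + 1}" using r1(2) by blast
    have "del Xv (i + 1) \<in> InvV V (k + 1) p" using pr(1) insI fi(1) by simp
    moreover have "del Xv (i + 1 + 1) \<in> InvV V (k + 1) p" using pr(2) insI fi(2) by simp
    ultimately show "S \<in> {del Xv j | j. 1 \<le> j \<and> j \<le> k + 1 + 1} \<inter> InvV V (k + 1) p"
      using S m1 m2 by blast
  qed
  show ?thesis
  proof (cases "odd (k - i)")
    case True
    have "(insert v (del X i), insert v (del X (i + 1))) \<in> qrelV V (k + 1) p"
      by (rule qrelI[OF sv qv _ _ FE]) (use pr True assms(7,8) in auto)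
    then show ?thesis using True by simp
  next
    case False
    have "(insert v (del X (i + 1)), insert v (del X i)) \<in> qrelV V (k + 1) p"
      by (rule qrelI[OF sv qv _ _ FE]) (use pr False assms(7,8) in auto)
    then show ?thesis using False by simp
  qed
qed

lemma lift_qrel1:
  assumes "finite X" "card X = k + 1" "X \<subseteq> V" "v \<in> V" "\<forall>x\<in>X. v < x" "good p X"
    "\<not> p (elt X 1) < p v" "\<forall>x\<in>X. x \<noteq> elt X 1 \<longrightarrow> p x < p v"
  shows "(if odd k then (X, insert v (del X 1)) else (insert v (del X 1), X)) \<in> qrelV V (k + 1) p"
proof -
  define Xv where "Xv = insert v X"
  have nv: "v \<notin> X" using assms(5) by auto
  have x1: "elt X 1 \<in> X" using elt_in[OF assms(1)] assms(2) by auto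
  have qv: "qinv p Xv" unfolding Xv_def
  proof (rule quasi_intro[of v _ "elt X 1"])
    show "v \<in> insert v X" "elt X 1 \<in> insert v X" "v < elt X 1" "\<not> p (elt X 1) < p v"
      using x1 assms(5,7) by auto
    fix a' b' assume h: "a' \<in> insert v X" "b' \<in> insert v X" "a' < b'" "(a', b') \<noteq> (v, elt X 1)"
    show "p b' < p a'"
    proof (cases "a' = v")
      case True
      then have "b' \<in> X" "b' \<noteq> elt X 1" using h by auto
      then show ?thesis using True assms(8) by auto
    next
      case False
      then have "a' \<in> X" using h by auto
      then have "b' \<in> X" using h assms(5) by auto
      then show ?thesis using assms(6) h \<open>a' \<in> X\<close> by auto
    qed
  qed
  have cv: "card Xv = k + 1 + 1" using nv assms(1,2) by (simp add: Xv_def)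
  have sv: "Xv \<in> subsetsV V (k + 1 + 1)" using cv assms(3,4) by (simp add: subsetsV_def Xv_def)
  have d1: "del Xv 1 = X" using del_insert_min(1)[OF assms(1,5)] by (simp add: Xv_def)
  have dS: "del Xv (Suc j) = insert v (del X j)" if "1 \<le> j" "j \<le> k + 1" for j
    using del_insert_min(2)[OF assms(1,5) that(1)] that assms(2) by (simp add: Xv_def)
  have XI: "X \<in> InvV V (k + 1) p" using assms by (simp add: InvV_iff)
  have fd: "finite (del X 1)" using assms(1) del_sub[of X 1] finite_subset by blast
  have d1I: "del X 1 \<in> InvV V k p"
    using assms(1,2,3,6) del_sub[of X 1] del_card[OF assms(1), of 1] by (auto simp: InvV_iff)
  have "\<forall>y\<in>del X 1. v < y \<and> p y < p v" using assms(5,8) del_sub[of X 1] by (auto simp: del_def)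
  then have d2I: "insert v (del X 1) \<in> InvV V (k + 1) p" using ins_inv[OF assms(4) fd] d1I by simp
  have oth: "insert v (del X j) \<notin> InvV V (k + 1) p" if "2 \<le> j" "j \<le> k + 1" for j
  proof
    assume "insert v (del X j) \<in> InvV V (k + 1) p"
    then have g: "good p (insert v (del X j))" by (simp add: InvV_iff)
    have "elt X 1 \<noteq> elt X j" using elt_inj[OF assms(1), of 1 j] that assms(2) by auto
    then have "elt X 1 \<in> del X j" using x1 by (simp add: del_def)
    then show False using g assms(5,7) x1 by auto
  qed
  have FE: "{del Xv j | j. 1 \<le> j \<and> j \<le> k + 1 + 1} \<inter> InvV V (k + 1) p = {del Xv 1, del Xv (1 + 1)}"
  proof (intro equalityI subsetI)
    fix S assume "S \<in> {del Xv j | j. 1 \<le> j \<and> j \<le> k + 1 + 1} \<inter> InvV V (k + 1) p"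
    then obtain j where j: "1 \<le> j" "j \<le> k + 2" "S = del Xv j" "S \<in> InvV V (k + 1) p" by auto
    show "S \<in> {del Xv 1, del Xv (1 + 1)}"
    proof (cases "j \<le> 2")
      case True then have "j = 1 \<or> j = 2" using j by auto
      then show ?thesis using j by (auto simp: numeral_2_eq_2)
    next
      case False
      then obtain j' where j': "j = Suc j'" "2 \<le> j'" "j' \<le> k + 1" using j by (cases j) auto
      then have "S = insert v (del X j')" using dS j by simp
      then show ?thesis using oth j' j by simp
    qed
  next
    fix S assume "S \<in> {del Xv 1, del Xv (1 + 1)}"
    moreover have "del Xv 1 \<in> InvV V (k + 1) p" using d1 XI by simp
    moreover have "del Xv 2 \<in> InvV V (k + 1) p" using dS[of 1] d2I by (simp add: numeral_2_eq_2)
    ultimately show "S \<in> {del Xv j | j. 1 \<le> j \<and> j \<le> k + 1 + 1} \<inter> InvV V (k + 1) p"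
      by (auto simp: numeral_2_eq_2)
  qed
  have pr: "del Xv 1 = X" "del Xv (1 + 1) = insert v (del X 1)"
    using d1 dS[of 1] by auto
  show ?thesis
  proof (cases "odd k")
    case True
    have "(X, insert v (del X 1)) \<in> qrelV V (k + 1) p"
      by (rule qrelI[OF sv qv _ _ FE]) (use pr True in auto)
    then show ?thesis using True by simp
  next
    case False
    have "(insert v (del X 1), X) \<in> qrelV V (k + 1) p"
      by (rule qrelI[OF sv qv _ _ FE]) (use pr False in auto)
    then show ?thesis using False by simp
  qed
qed




lemma qrelE:
  assumes "(Y, Z) \<in> qrelV V m p"
  obtains X i where "X \<in> subsetsV V (m + 1)" "qinv p X" "1 \<le> i" "i \<le> m"
      "{del X j | j. 1 \<le> j \<and> j \<le> m + 1} \<inter> InvV V m p = {del X i, del X (i + 1)}"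
      "if odd (m - i) then (Y, Z) = (del X i, del X (i + 1)) else (Y, Z) = (del X (i + 1), del X i)"
  using assms unfolding qrelV_def mem_Collect_eq case_prod_conv by blast

lemma card_fin: "card X = Suc m \<Longrightarrow> finite X"
  by (metis card.infinite Zero_not_Suc)

lemma qrel_mono: "W \<subseteq> V \<Longrightarrow> qrelV W m p \<subseteq> qrelV V m p"
proof (rule subrelI)
  fix Y Z assume W: "W \<subseteq> V" and yz: "(Y, Z) \<in> qrelV W m p"
  obtain X i where X: "X \<in> subsetsV W (m + 1)" "qinv p X" "1 \<le> i" "i \<le> m"
      "{del X j | j. 1 \<le> j \<and> j \<le> m + 1} \<inter> InvV W m p = {del X i, del X (i + 1)}"
      "if odd (m - i) then (Y, Z) = (del X i, del X (i + 1)) else (Y, Z) = (del X (i + 1), del X i)"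
    using yz by (rule qrelE)
  have XW: "X \<subseteq> W" using X(1) by (simp add: subsetsV_def)
  have s1: "X \<in> subsetsV V (m + 1)" using X(1) W by (auto simp: subsetsV_def)
  have s2: "{del X j | j. 1 \<le> j \<and> j \<le> m + 1} \<inter> InvV V m p = {del X i, del X (i + 1)}"
    using X(5) facets_inv_sub[OF XW W] by simp
  show "(Y, Z) \<in> qrelV V m p" by (rule qrelI[OF s1 X(2,3,4) s2 X(6)])
qed

lemma qrel_restrict:
  assumes "(Y, Z) \<in> qrelV V m p" "W \<subseteq> V" "Y \<union> Z \<subseteq> W"
  shows "(Y, Z) \<in> qrelV W m p"
proof -
  obtain X i where X: "X \<in> subsetsV V (m + 1)" "qinv p X" "1 \<le> i" "i \<le> m"
      "{del X j | j. 1 \<le> j \<and> j \<le> m + 1} \<inter> InvV V m p = {del X i, del X (i + 1)}"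
      "if odd (m - i) then (Y, Z) = (del X i, del X (i + 1)) else (Y, Z) = (del X (i + 1), del X i)"
    using assms(1) by (rule qrelE)
  have f: "finite X" "card X = m + 1" using X(1) card_fin by (auto simp: subsetsV_def)
  have "del X i \<union> del X (i + 1) = X" using del_union[OF f(1)] f(2) X(3,4) by simp
  moreover have "Y \<union> Z = del X i \<union> del X (i + 1)" using X(6) by (auto split: if_splits)
  ultimately have XW: "X \<subseteq> W" using assms(3) by simp
  have s1: "X \<in> subsetsV W (m + 1)" using X(1) XW by (auto simp: subsetsV_def)
  have s2: "{del X j | j. 1 \<le> j \<and> j \<le> m + 1} \<inter> InvV W m p = {del X i, del X (i + 1)}"
    using X(5) facets_inv_sub[OF XW assms(2)] by simp
  show ?thesis by (rule qrelI[OF s1 X(2,3,4) s2 X(6)])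
qed

lemma del_cons:
  assumes "consV V k p R"
  shows "consV (V - {v}) k p {X \<in> R. v \<notin> X}"
proof -
  have RI: "R \<subseteq> InvV V (k + 1) p" using assms by (simp add: consV_def)
  have c1: "{X \<in> R. v \<notin> X} \<subseteq> InvV (V - {v}) (k + 1) p"
  proof
    fix X assume "X \<in> {X \<in> R. v \<notin> X}"
    then have "X \<in> InvV V (k + 1) p" "v \<notin> X" using RI by auto
    then show "X \<in> InvV (V - {v}) (k + 1) p" by (auto simp: InvV_iff)
  qed
  have c2: "Y \<in> {X \<in> R. v \<notin> X}" if "PleqV (V - {v}) (k + 1) p Y Z" "Z \<in> {X \<in> R. v \<notin> X}" for Y Z
  proof -
    have "(Y, Z) \<in> (qrelV V (k + 1) p)\<^sup>*"
      using that(1) rtrancl_mono[OF qrel_mono[of "V - {v}" V]] by (auto simp: PleqV_def)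
    moreover have "Y \<in> InvV V (k + 1) p" "Z \<in> InvV V (k + 1) p" "v \<notin> Y"
      using that(1) by (auto simp: PleqV_def InvV_iff)
    ultimately show ?thesis using assms that(2) by (auto simp: consV_def PleqV_def)
  qed
  have c3: "is_prefix X (Pset X \<inter> {X \<in> R. v \<notin> X}) \<or> is_suffix X (Pset X \<inter> {X \<in> R. v \<notin> X})"
    if "X \<in> InvV (V - {v}) (k + 2) p" for X
  proof -
    have "X \<in> InvV V (k + 2) p" "v \<notin> X" using that by (auto simp: InvV_iff)
    moreover have "Pset X \<inter> {X \<in> R. v \<notin> X} = Pset X \<inter> R"
      using \<open>v \<notin> X\<close> del_sub by (auto simp: Pset_def)
    ultimately show ?thesis using assms by (simp add: consV_def)
  qed
  show ?thesis unfolding consV_def using c1 c2 c3 by blast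
qed

lemma del_edges:
  assumes "(Y, Z) \<in> GRV V k p R" "R \<subseteq> InvV V (k + 1) p" "v \<notin> Y" "v \<notin> Z"
  shows "(Y, Z) \<in> GRV (V - {v}) k p {X \<in> R. v \<notin> X}"
  using assms(1,2)
proof (cases rule: edge_cases)
  case (R X i)
  have f: "finite X" "card X = k + 1" using R(1) card_fin by (auto simp: InvV_iff)
  have "X = Y \<union> Z" using del_union[OF f(1), of i] f(2) R by simp
  then have "v \<notin> X" using assms(3,4) by simp
  then show ?thesis using R unfolding GRV_alt by blast
next
  case (N X i)
  have f: "finite X" "card X = k + 1" using N(1) card_fin by (auto simp: InvV_iff)
  have "X = Y \<union> Z" using del_union[OF f(1), of i] f(2) N by auto
  then have "v \<notin> X" using assms(3,4) by simp
  then have "X \<in> InvV (V - {v}) (k + 1) p - {X \<in> R. v \<notin> X}" using N(1,2) by (auto simp: InvV_iff)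
  then show ?thesis using N unfolding GRV_alt by blast
next
  case (Q X i)
  have "(Y, Z) \<in> qrelV V k p" using qrelI[of X V k p i] Q by (simp add: subsetsV_def)
  then have "(Y, Z) \<in> qrelV (V - {v}) k p"
    using qrel_restrict[of Y Z V k p "V - {v}"] assms(3,4) qrel_inv[of Y Z V k p]
    by (auto simp: InvV_iff)
  then show ?thesis unfolding GRV_alt by blast
qed




lemma good_ins: "good p Y \<Longrightarrow> \<forall>y\<in>Y. v < y \<and> p y < p v \<Longrightarrow> good p (insert v Y)"
proof (intro ballI impI)
  fix a b assume g: "good p Y" and h: "\<forall>y\<in>Y. v < y \<and> p y < p v"
    and ab: "a \<in> insert v Y" "b \<in> insert v Y" "a < b"
  show "p b < p a"
  proof (cases "a = v")
    case True
    then have "b \<in> Y" using ab by auto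
    then show ?thesis using True h by auto
  next
    case False
    then have aY: "a \<in> Y" using ab by auto
    then have "b \<noteq> v" using ab h by auto
    then show ?thesis using aY ab g by auto
  qed
qed

lemma elts:
  assumes "finite X" "card X = k + 1" "1 \<le> i" "i \<le> k"
  shows "elt X i \<in> X" "elt X (i+1) \<in> X" "elt X 1 \<in> X" "elt X i < elt X (i+1)"
    "elt X 1 < elt X (i+1)" "i \<noteq> 1 \<Longrightarrow> elt X 1 < elt X i"
    "del X i = X - {elt X i}" "del X (i+1) = X - {elt X (i+1)}" "X = del X i \<union> del X (i+1)"
  using assms elt_in[OF assms(1)] elt_mono[OF assms(1)] del_union[OF assms(1), of i]
  by (auto simp: del_def)

locale step =
  fixes V :: "nat set" and v :: nat and p :: "nat \<Rightarrow> nat" and k :: nat and R :: "nat set set"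
  assumes fin: "finite V" and vV: "v \<in> V" and vmin: "\<And>x. x \<in> V \<Longrightarrow> x \<noteq> v \<Longrightarrow> v < x"
    and cons: "consV V k p R" and k1: "1 \<le> k"
begin

definition Dp :: "nat set \<Rightarrow> bool" where
  "Dp Y \<longleftrightarrow> (if (\<forall>y\<in>Y. p y < p v) then insert v Y \<in> R else even k)"

lemma RI: "R \<subseteq> InvV V (k + 1) p" using cons by (simp add: consV_def)

lemma qrel_R: "(Y, Z) \<in> qrelV V (k + 1) p \<Longrightarrow> Z \<in> R \<Longrightarrow> Y \<in> R"
  using cons qrel_inv[of Y Z V "k+1" p] unfolding consV_def PleqV_def by blast

lemma vdecomp:
  assumes "X \<subseteq> V" "v \<in> X" "card X = k + 1"
  shows "finite (X - {v})" "\<forall>x\<in>X - {v}. v < x" "X = insert v (X - {v})" "card (X - {v}) = k"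
    "del X 1 = X - {v}"
    "\<And>j. 1 \<le> j \<Longrightarrow> j \<le> k \<Longrightarrow> del X (Suc j) = insert v (del (X - {v}) j)"
    "\<And>j. 1 \<le> j \<Longrightarrow> j \<le> k + 1 \<Longrightarrow> v \<notin> del X j \<Longrightarrow> j = 1"
proof -
  have fX: "finite X" using assms(3) card_fin by simp
  show f: "finite (X - {v})" using fX by simp
  show m: "\<forall>x\<in>X - {v}. v < x" using assms(1) vmin by auto
  show e: "X = insert v (X - {v})" using assms(2) by auto
  show c: "card (X - {v}) = k" using assms(2,3) fX by simp
  show "del X 1 = X - {v}" using del_insert_min(1)[OF f m] e by metis
  show d: "\<And>j. 1 \<le> j \<Longrightarrow> j \<le> k \<Longrightarrow> del X (Suc j) = insert v (del (X - {v}) j)"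
    using del_insert_min(2)[OF f m] e c by metis
  show "\<And>j. 1 \<le> j \<Longrightarrow> j \<le> k + 1 \<Longrightarrow> v \<notin> del X j \<Longrightarrow> j = 1"
  proof (rule ccontr)
    fix j assume h: "1 \<le> j" "j \<le> k + 1" "v \<notin> del X j" "j \<noteq> 1"
    then obtain j' where "j = Suc j'" "1 \<le> j'" "j' \<le> k" by (cases j) auto
    then show False using d h by simp
  qed
qed

lemma crossing1:
  assumes "(Y, Z) \<in> GRV V k p R" "v \<notin> Y" "v \<in> Z"
  shows "Dp Y"
  using assms(1) RI
proof (cases rule: edge_cases)
  case (R X i)
  have XV: "X \<subseteq> V" "card X = k + 1" using R(1) by (auto simp: InvV_iff)
  have vX: "v \<in> X" using assms(3) R(6) del_sub by blast
  note vd = vdecomp[OF XV(1) vX XV(2)]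
  have "i = 1" using vd(7)[of i] R assms(2) by simp
  then have Y: "Y = X - {v}" using R vd(5) by simp
  have gX: "good p X" using R(1) by (simp add: InvV_iff)
  have "\<forall>y\<in>Y. p y < p v" using Y gX vd(2) vX by auto
  moreover have "insert v Y = X" using Y vX by auto
  ultimately show ?thesis using R(2) by (simp add: Dp_def)
next
  case (N X i)
  have XV: "X \<subseteq> V" "card X = k + 1" using N(1) by (auto simp: InvV_iff)
  have vX: "v \<in> X" using assms(3) N(6) del_sub by blast
  note vd = vdecomp[OF XV(1) vX XV(2)]
  have "i + 1 = 1" using vd(7)[of "i+1"] N assms(2) by simp
  then show ?thesis using N(3) by simp
next
  case (Q X i)
  have vX: "v \<in> X" using assms(3) Q(7) del_sub by (auto split: if_splits)
  note vd = vdecomp[OF Q(1) vX Q(2)]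
  show ?thesis
  proof (cases "odd (k - i)")
    case True
    then have YZ: "Y = del X i" using Q(7) by simp
    then have i1: "i = 1" using vd(7)[of i] Q(4,5) assms(2) by simp
    then have ek: "even k" using True k1 by (cases k) auto
    have "\<not> (\<forall>y\<in>Y. p y < p v)"
    proof
      assume a: "\<forall>y\<in>Y. p y < p v"
      have "Y \<in> InvV V k p" using facet_mem(1)[OF Q(6)] YZ by simp
      then have gY: "good p Y" by (simp add: InvV_iff)
      have Y': "Y = X - {v}" using YZ i1 vd(5) by simp
      have "\<forall>y\<in>Y. v < y \<and> p y < p v" using a vd(2) Y' by blast
      then have "good p (insert v Y)" by (rule good_ins[OF gY])
      moreover have "insert v Y = X" using Y' vX by auto
      ultimately show False using qinv_not_good[OF Q(3)] by simp
    qed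
    then show ?thesis using ek by (auto simp: Dp_def)
  next
    case False
    then have "Y = del X (i+1)" using Q(7) by simp
    then have "i + 1 = 1" using vd(7)[of "i+1"] Q(4,5) assms(2) by simp
    then show ?thesis using Q(4) by simp
  qed
qed

lemma crossing2:
  assumes "(Z, Y) \<in> GRV V k p R" "v \<in> Z" "v \<notin> Y"
  shows "\<not> Dp Y"
  using assms(1) RI
proof (cases rule: edge_cases)
  case (R X i)
  have XV: "X \<subseteq> V" "card X = k + 1" using R(1) by (auto simp: InvV_iff)
  have vX: "v \<in> X" using assms(2) R(5) del_sub by blast
  note vd = vdecomp[OF XV(1) vX XV(2)]
  have "i + 1 = 1" using vd(7)[of "i+1"] R assms(3) by simp
  then show ?thesis using R(3) by simp
next
  case (N X i)
  have XV: "X \<subseteq> V" "card X = k + 1" using N(1) by (auto simp: InvV_iff)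
  have vX: "v \<in> X" using assms(2) N(5) del_sub by blast
  note vd = vdecomp[OF XV(1) vX XV(2)]
  have "i = 1" using vd(7)[of i] N assms(3) by simp
  then have Y: "Y = X - {v}" using N vd(5) by simp
  have gX: "good p X" using N(1) by (simp add: InvV_iff)
  have "\<forall>y\<in>Y. p y < p v" using Y gX vd(2) vX by auto
  moreover have "insert v Y = X" using Y vX by auto
  ultimately show ?thesis using N(2) by (simp add: Dp_def)
next
  case (Q X i)
  have vX: "v \<in> X" using assms(2) Q(7) del_sub by (auto split: if_splits)
  note vd = vdecomp[OF Q(1) vX Q(2)]
  show ?thesis
  proof (cases "odd (k - i)")
    case True
    then have "Y = del X (i+1)" using Q(7) by simp
    then have "i + 1 = 1" using vd(7)[of "i+1"] Q(4,5) assms(3) by simp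
    then show ?thesis using Q(4) by simp
  next
    case False
    then have YZ: "Y = del X i" using Q(7) by simp
    then have i1: "i = 1" using vd(7)[of i] Q(4,5) assms(3) by simp
    then have ok: "odd k" using False k1 by (cases k) auto
    have "\<not> (\<forall>y\<in>Y. p y < p v)"
    proof
      assume a: "\<forall>y\<in>Y. p y < p v"
      have "Y \<in> InvV V k p" using facet_mem(1)[OF Q(6)] YZ by simp
      then have gY: "good p Y" by (simp add: InvV_iff)
      have Y': "Y = X - {v}" using YZ i1 vd(5) by simp
      have "\<forall>y\<in>Y. v < y \<and> p y < p v" using a vd(2) Y' by blast
      then have "good p (insert v Y)" by (rule good_ins[OF gY])
      moreover have "insert v Y = X" using Y' vX by auto
      ultimately show False using qinv_not_good[OF Q(3)] by simp
    qed
    then show ?thesis using ok by (auto simp: Dp_def)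
  qed
qed

end




context step
begin

lemma backward:
  assumes "(Y, Z) \<in> GRV V k p R" "v \<notin> Y" "v \<notin> Z" "Dp Z"
  shows "Dp Y"
  using assms(1) RI
proof (cases rule: edge_cases)
  case (R X i)
  have XV: "X \<subseteq> V" "card X = k + 1" using R(1) by (auto simp: InvV_iff)
  have fX: "finite X" using XV(2) card_fin by simp
  have gX: "good p X" using R(1) by (simp add: InvV_iff)
  note el = elts[OF fX XV(2) R(3,4)]
  define a where "a = elt X i"
  define b where "b = elt X (i+1)"
  have Y: "Y = X - {a}" and Z: "Z = X - {b}" using R el by (auto simp: a_def b_def)
  have vnX: "v \<notin> X" using el(9) R assms(2,3) by auto
  have vX: "\<forall>x\<in>X. v < x" using vnX XV(1) vmin by auto
  have ab: "a \<in> X" "b \<in> X" "a < b" using el by (auto simp: a_def b_def)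
  show ?thesis
  proof (cases "\<forall>z\<in>Z. p z < p v")
    case GZ: True
    then have IZ: "insert v Z \<in> R" using assms(4) by (auto simp: Dp_def)
    have GY: "\<forall>y\<in>Y. p y < p v"
    proof
      fix y assume "y \<in> Y"
      show "p y < p v"
      proof (cases "y = b")
        case True
        have "p b < p a" using gX ab by auto
        moreover have "a \<in> Z" using ab Z by auto
        ultimately show ?thesis using GZ True by force
      next
        case False
        then show ?thesis using \<open>y \<in> Y\<close> Y Z GZ by auto
      qed
    qed
    have GX: "\<forall>x\<in>X. v < x \<and> p x < p v"
    proof
      fix x assume x: "x \<in> X"
      have "x \<in> Y \<or> x \<in> Z" using x Y Z ab(3) by auto
      then show "v < x \<and> p x < p v" using GY GZ vX x by blast
    qed
    have "insert v X \<in> InvV V (Suc (k + 1)) p" using ins_inv[OF vV fX GX] R(1) by simp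
    then have XvI: "insert v X \<in> InvV V (k + 2) p" by simp
    have d1: "del (insert v X) 1 = X" using del_insert_min(1)[OF fX vX] .
    have di: "del (insert v X) (i + 1) = insert v Y" using del_insert_min(2)[OF fX vX, of i] R XV by simp
    have dj: "del (insert v X) (i + 1 + 1) = insert v Z" using del_insert_min(2)[OF fX vX, of "i+1"] R XV by simp
    have "insert v Y \<in> R" using cons_mono(1)[OF cons XvI, of "i+1"] R(2,3,4) d1 di dj IZ by simp
    then show ?thesis using GY by (auto simp: Dp_def)
  next
    case NGZ: False
    then have ek: "even k" using assms(4) by (auto simp: Dp_def)
    show ?thesis
    proof (cases "\<forall>y\<in>Y. p y < p v")
      case False then show ?thesis using ek by (auto simp: Dp_def)
    next
      case GY: True
      obtain z where z: "z \<in> Z" "\<not> p z < p v" using NGZ by auto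
      have za: "z = a" using z GY Y Z by auto
      have i1: "i = 1"
      proof (rule ccontr)
        assume "i \<noteq> 1"
        then have "elt X 1 < a" using el(6) by (simp add: a_def)
        moreover then have "elt X 1 \<in> Y" using Y el(3) by auto
        ultimately show False using gX GY ab z za el(3) by force
      qed
      have o: "\<forall>x\<in>X. x \<noteq> elt X 1 \<longrightarrow> p x < p v" using GY Y i1 by (auto simp: a_def)
      have "\<not> p (elt X 1) < p v" using z za i1 by (simp add: a_def)
      from lift_qrel1[OF fX XV(2) XV(1) vV vX gX this o]
      have "(insert v (del X 1), X) \<in> qrelV V (k + 1) p" using ek by simp
      then have "insert v (del X 1) \<in> R" using qrel_R R(2) by blast
      then have "insert v Y \<in> R" using R(5) i1 by simp
      then show ?thesis using GY by (auto simp: Dp_def)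
    qed
  qed
next
  case (N X i)
  have XV: "X \<subseteq> V" "card X = k + 1" using N(1) by (auto simp: InvV_iff)
  have fX: "finite X" using XV(2) card_fin by simp
  have gX: "good p X" using N(1) by (simp add: InvV_iff)
  note el = elts[OF fX XV(2) N(3,4)]
  define a where "a = elt X i"
  define b where "b = elt X (i+1)"
  have Y: "Y = X - {b}" and Z: "Z = X - {a}" using N el by (auto simp: a_def b_def)
  have vnX: "v \<notin> X" using el(9) N assms(2,3) by auto
  have vX: "\<forall>x\<in>X. v < x" using vnX XV(1) vmin by auto
  have ab: "a \<in> X" "b \<in> X" "a < b" using el by (auto simp: a_def b_def)
  show ?thesis
  proof (cases "\<forall>z\<in>Z. p z < p v")
    case GZ: True
    then have IZ: "insert v Z \<in> R" using assms(4) by (auto simp: Dp_def)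
    show ?thesis
    proof (cases "\<forall>y\<in>Y. p y < p v")
      case GY: True
      have GX: "\<forall>x\<in>X. v < x \<and> p x < p v"
    proof
      fix x assume x: "x \<in> X"
      have "x \<in> Y \<or> x \<in> Z" using x Y Z ab(3) by auto
      then show "v < x \<and> p x < p v" using GY GZ vX x by blast
    qed
      have "insert v X \<in> InvV V (Suc (k + 1)) p" using ins_inv[OF vV fX GX] N(1) by simp
      then have XvI: "insert v X \<in> InvV V (k + 2) p" by simp
      have d1: "del (insert v X) 1 = X" using del_insert_min(1)[OF fX vX] .
      have di: "del (insert v X) (i + 1) = insert v Z" using del_insert_min(2)[OF fX vX, of i] N XV by simp
      have dj: "del (insert v X) (i + 1 + 1) = insert v Y" using del_insert_min(2)[OF fX vX, of "i+1"] N XV by simp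
      have "insert v Y \<in> R" using cons_mono(2)[OF cons XvI, of "i+1"] N(2,3,4) d1 di dj IZ by simp
      then show ?thesis using GY by (auto simp: Dp_def)
    next
      case NGY: False
      obtain y where y: "y \<in> Y" "\<not> p y < p v" using NGY by auto
      have ya: "y = a" using y GZ Y Z by auto
      have i1: "i = 1"
      proof (rule ccontr)
        assume "i \<noteq> 1"
        then have "elt X 1 < a" using el(6) by (simp add: a_def)
        moreover then have "elt X 1 \<in> Z" using Z el(3) by auto
        ultimately show False using gX GZ ab y ya el(3) by force
      qed
      have ek: "even k"
      proof (rule ccontr)
        assume ok: "\<not> even k"
        have o: "\<forall>x\<in>X. x \<noteq> elt X 1 \<longrightarrow> p x < p v" using GZ Z i1 by (auto simp: a_def)
        have "\<not> p (elt X 1) < p v" using y ya i1 by (simp add: a_def)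
        from lift_qrel1[OF fX XV(2) XV(1) vV vX gX this o]
        have "(X, insert v (del X 1)) \<in> qrelV V (k + 1) p" using ok by simp
        moreover have "insert v (del X 1) \<in> R" using IZ N(6) i1 by simp
        ultimately have "X \<in> R" using qrel_R by blast
        then show False using N(2) by simp
      qed
      then show ?thesis using NGY by (auto simp: Dp_def)
    qed
  next
    case NGZ: False
    then have ek: "even k" using assms(4) by (auto simp: Dp_def)
    show ?thesis
    proof (cases "\<forall>y\<in>Y. p y < p v")
      case False then show ?thesis using ek by (auto simp: Dp_def)
    next
      case GY: True
      obtain z where z: "z \<in> Z" "\<not> p z < p v" using NGZ by auto
      have zb: "z = b" using z GY Y Z by auto
      have "a \<in> Y" using ab Y by auto
      then show ?thesis using gX ab GY z zb by force
    qed
  qed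
next
  case (Q X i)
  have fX: "finite X" using Q(2) card_fin by simp
  note el = elts[OF fX Q(2) Q(4,5)]
  define a where "a = elt X i"
  define b where "b = elt X (i+1)"
  have fi: "del X i \<in> InvV V k p" "del X (i+1) \<in> InvV V k p" using facet_mem[OF Q(6)] by auto
  then have gi: "good p (del X i)" "good p (del X (i + 1))" by (auto simp: InvV_iff)
  note qs = quasi_struct[OF fX Q(2) Q(3) Q(4,5) gi]
  have qb: "\<not> p b < p a" using qs(1) by (simp add: a_def b_def)
  have qo: "\<And>c d. c \<in> X \<Longrightarrow> d \<in> X \<Longrightarrow> c < d \<Longrightarrow> (c, d) \<noteq> (a, b) \<Longrightarrow> p d < p c"
    using qs(2) by (simp add: a_def b_def)
  have ab: "a \<in> X" "b \<in> X" "a < b" using el by (auto simp: a_def b_def)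
  have x1: "elt X 1 \<in> X" "elt X 1 < b" "i \<noteq> 1 \<Longrightarrow> elt X 1 < a" using el by (auto simp: a_def b_def)
  have YZX: "X = Y \<union> Z" using el(9) Q(7) by (auto split: if_splits)
  have vnX: "v \<notin> X" using YZX assms(2,3) by auto
  have vX: "\<forall>x\<in>X. v < x" using vnX Q(1) vmin by auto
  have YZ: "(odd (k - i) \<longrightarrow> Y = X - {a} \<and> Z = X - {b}) \<and> (\<not> odd (k - i) \<longrightarrow> Y = X - {b} \<and> Z = X - {a})"
    using Q(7) el(7,8) by (auto simp: a_def b_def split: if_splits)
  show ?thesis
  proof (cases "\<forall>z\<in>Z. p z < p v")
    case GZ: True
    then have IZ: "insert v Z \<in> R" using assms(4) by (auto simp: Dp_def)
    show ?thesis
    proof (cases "\<forall>y\<in>Y. p y < p v")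
      case GY: True
      have GX: "\<forall>x\<in>X. v < x \<and> p x < p v" using GY GZ vX YZX by auto
      from lift_qrel[OF fX Q(2) Q(1) vV GX Q(3) Q(4,5) Q(6)]
      have "(insert v Y, insert v Z) \<in> qrelV V (k + 1) p" using Q(7) by (auto split: if_splits)
      then have "insert v Y \<in> R" using qrel_R IZ by blast
      then show ?thesis using GY by (auto simp: Dp_def)
    next
      case NGY: False
      obtain y where y: "y \<in> Y" "\<not> p y < p v" using NGY by auto
      have ek: "even k"
      proof (cases "odd (k - i)")
        case True
        then have yb: "y = b" using YZ y GZ by auto
        have i1: "i = 1"
        proof (rule ccontr)
          assume "i \<noteq> 1"
          then have "elt X 1 < a" using x1 by simp
          then have "elt X 1 \<in> Z" "(elt X 1, b) \<noteq> (a, b)" using YZ True x1 by auto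
          then show False using qo[of "elt X 1" b] x1 ab GZ y yb by force
        qed
        then show ?thesis using True k1 by (cases k) auto
      next
        case False
        then have ya: "y = a" using YZ y GZ by auto
        have "b \<in> Z" using YZ False ab by auto
        then show ?thesis using GZ qb y ya by force
      qed
      then show ?thesis using NGY by (auto simp: Dp_def)
    qed
  next
    case NGZ: False
    then have ek: "even k" using assms(4) by (auto simp: Dp_def)
    show ?thesis
    proof (cases "\<forall>y\<in>Y. p y < p v")
      case False then show ?thesis using ek by (auto simp: Dp_def)
    next
      case GY: True
      obtain z where z: "z \<in> Z" "\<not> p z < p v" using NGZ by auto
      show ?thesis
      proof (cases "odd (k - i)")
        case True
        then have za: "z = a" using YZ z GY by auto
        have "b \<in> Y" using YZ True ab by auto
        then show ?thesis using GY qb z za by force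
      next
        case False
        then have zb: "z = b" using YZ z GY by auto
        have "i \<noteq> 1" using False ek k1 by (cases k) auto
        then have "elt X 1 < a" using x1 by simp
        then have "elt X 1 \<in> Y" "(elt X 1, b) \<noteq> (a, b)" using YZ False x1 by auto
        then show ?thesis using qo[of "elt X 1" b] x1 ab GY z zb by force
      qed
    qed
  qed
qed

end




context step
begin

definition V2 :: "nat set" where "V2 = {t \<in> V. t \<noteq> v \<and> p t < p v}"
definition RB :: "nat set set" where "RB = {T. v \<notin> T \<and> insert v T \<in> R}"

lemma V2_sub: "V2 \<subseteq> V" by (auto simp: V2_def)
lemma V2_elts: "t \<in> V2 \<Longrightarrow> v < t \<and> p t < p v" using vmin by (auto simp: V2_def)

lemma ins_V2:
  assumes "Y \<subseteq> V2" "finite Y"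
  shows "insert v Y \<in> InvV V (Suc m) p \<longleftrightarrow> Y \<in> InvV V2 m p"
proof -
  have "\<forall>y\<in>Y. v < y \<and> p y < p v" using assms(1) V2_elts by auto
  then have "insert v Y \<in> InvV V (Suc m) p \<longleftrightarrow> Y \<in> InvV V m p" using ins_inv[OF vV assms(2)] by simp
  also have "\<dots> \<longleftrightarrow> Y \<in> InvV V2 m p" using inv_sub[OF assms(1) V2_sub] by simp
  finally show ?thesis .
qed

lemma lift_step:
  assumes "(A, B) \<in> qrelV V2 k p"
  shows "(insert v A, insert v B) \<in> qrelV V (k + 1) p"
proof -
  obtain X i where X: "X \<in> subsetsV V2 (k + 1)" "qinv p X" "1 \<le> i" "i \<le> k"
      "{del X j | j. 1 \<le> j \<and> j \<le> k + 1} \<inter> InvV V2 k p = {del X i, del X (i + 1)}"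
      "if odd (k - i) then (A, B) = (del X i, del X (i + 1)) else (A, B) = (del X (i + 1), del X i)"
    using assms by (rule qrelE)
  have XV2: "X \<subseteq> V2" "card X = k + 1" using X(1) by (auto simp: subsetsV_def)
  have fX: "finite X" using XV2(2) card_fin by simp
  have XV: "X \<subseteq> V" using XV2 V2_sub by auto
  have GX: "\<forall>x\<in>X. v < x \<and> p x < p v" using XV2 V2_elts by auto
  have FE: "{del X j | j. 1 \<le> j \<and> j \<le> k + 1} \<inter> InvV V k p = {del X i, del X (i + 1)}"
    using X(5) facets_inv_sub[OF XV2(1) V2_sub] by simp
  from lift_qrel[OF fX XV2(2) XV vV GX X(2) X(3,4) FE]
  show ?thesis using X(6) by (auto split: if_splits)
qed

lemma con_cons: "consV V2 (k - 1) p RB"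
proof -
  have kk: "k - 1 + 1 = k" "k - 1 + 2 = k + 1" using k1 by auto
  have c1: "RB \<subseteq> InvV V2 k p"
  proof
    fix T assume "T \<in> RB"
    then have T: "v \<notin> T" "insert v T \<in> R" by (auto simp: RB_def)
    then have TI: "insert v T \<in> InvV V (k + 1) p" using RI by auto
    have "card (insert v T) = Suc k" using TI by (simp add: InvV_iff)
    then have "finite (insert v T)" by (rule card_fin)
    then have fT: "finite T" by simp
    have "T \<subseteq> V2"
    proof
      fix t assume "t \<in> T"
      then have "t \<in> V" "t \<noteq> v" using TI T(1) by (auto simp: InvV_iff)
      then have "v < t" using vmin by simp
      then have "p t < p v" using TI \<open>t \<in> T\<close> by (auto simp: InvV_iff)
      then show "t \<in> V2" using \<open>t \<in> V\<close> \<open>t \<noteq> v\<close> by (simp add: V2_def)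
    qed
    then show "T \<in> InvV V2 k p" using ins_V2[OF _ fT, of k] TI by simp
  qed
  have c2: "Y \<in> RB" if "PleqV V2 k p Y Z" "Z \<in> RB" for Y Z
  proof -
    have YZ: "Y \<in> InvV V2 k p" "Z \<in> InvV V2 k p" "(Y, Z) \<in> (qrelV V2 k p)\<^sup>*"
      using that(1) by (auto simp: PleqV_def)
    have "(insert v Y, insert v Z) \<in> (qrelV V (k + 1) p)\<^sup>*"
      using YZ(3)
    proof (induction rule: rtrancl_induct)
      case base then show ?case by simp
    next
      case (step B C)
      then show ?case using lift_step by (meson rtrancl.rtrancl_into_rtrancl)
    qed
    moreover have "insert v Y \<in> InvV V (k + 1) p" "insert v Z \<in> InvV V (k + 1) p"
    proof -
      have cY: "card Y = k" "card Z = k" using YZ(1,2) by (auto simp: InvV_iff)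
      have fY: "finite Y" "finite Z" using cY k1 card_ge_0_finite[of Y] card_ge_0_finite[of Z] by auto
      show "insert v Y \<in> InvV V (k + 1) p" using ins_V2[OF _ fY(1), of k] YZ(1) by (auto simp: InvV_iff)
      show "insert v Z \<in> InvV V (k + 1) p" using ins_V2[OF _ fY(2), of k] YZ(2) by (auto simp: InvV_iff)
    qed
    moreover have "insert v Z \<in> R" using that(2) by (simp add: RB_def)
    ultimately have "insert v Y \<in> R" using cons by (auto simp: consV_def PleqV_def)
    moreover have "v \<notin> Y" using YZ(1) V2_elts by (auto simp: InvV_iff)
    ultimately show ?thesis by (simp add: RB_def)
  qed
  have c3: "is_prefix X (Pset X \<inter> RB) \<or> is_suffix X (Pset X \<inter> RB)" if "X \<in> InvV V2 (k + 1) p" for X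
  proof -
    have XV2: "X \<subseteq> V2" "card X = k + 1" using that by (auto simp: InvV_iff)
    have fX: "finite X" using XV2(2) card_fin by simp
    have vX: "\<forall>x\<in>X. v < x" using XV2(1) V2_elts by auto
    have "insert v X \<in> InvV V (Suc (k + 1)) p" using ins_V2[OF XV2(1) fX] that by simp
    then have XvI: "insert v X \<in> InvV V (k + 2) p" by simp
    have cXv: "card (insert v X) = Suc (Suc k)" using XvI by (simp add: InvV_iff)
    have fXv: "finite (insert v X)" "card (insert v X) = k + 2" using card_fin[OF cXv] cXv by auto
    have "is_prefix (insert v X) (Pset (insert v X) \<inter> R) \<or> is_suffix (insert v X) (Pset (insert v X) \<inter> R)"
      using cons XvI by (simp add: consV_def)
    from ps_index[OF fXv this]
    have P: "(\<exists>s. \<forall>j. 1 \<le> j \<longrightarrow> j \<le> k + 2 \<longrightarrow> (del (insert v X) j \<in> R \<longleftrightarrow> s \<le> j))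
       \<or> (\<exists>s. \<forall>j. 1 \<le> j \<longrightarrow> j \<le> k + 2 \<longrightarrow> (del (insert v X) j \<in> R \<longleftrightarrow> j \<le> s))" .
    have sh: "del X j \<in> RB \<longleftrightarrow> del (insert v X) (Suc j) \<in> R" if "1 \<le> j" "j \<le> k + 1" for j
    proof -
      have "v \<notin> del X j" using vX del_sub[of X j] by auto
      moreover have "del (insert v X) (Suc j) = insert v (del X j)"
        using del_insert_min(2)[OF fX vX that(1)] that(2) XV2(2) by simp
      ultimately show ?thesis by (simp add: RB_def)
    qed
    from P show ?thesis
    proof
      assume "\<exists>s. \<forall>j. 1 \<le> j \<longrightarrow> j \<le> k + 2 \<longrightarrow> (del (insert v X) j \<in> R \<longleftrightarrow> s \<le> j)"
      then obtain s where s: "\<forall>j. 1 \<le> j \<longrightarrow> j \<le> k + 2 \<longrightarrow> (del (insert v X) j \<in> R \<longleftrightarrow> s \<le> j)" by blast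
      have "\<forall>j. 1 \<le> j \<longrightarrow> j \<le> k + 1 \<longrightarrow> (del X j \<in> RB \<longleftrightarrow> s - 1 \<le> j)"
      proof (intro allI impI)
        fix j assume j: "1 \<le> j" "j \<le> k + 1"
        have "del X j \<in> RB \<longleftrightarrow> s \<le> Suc j" using sh[OF j] s j by simp
        moreover have "s \<le> Suc j \<longleftrightarrow> s - 1 \<le> j" by arith
        ultimately show "del X j \<in> RB \<longleftrightarrow> s - 1 \<le> j" by simp
      qed
      then show ?thesis using ps_conv_prefix[OF fX XV2(2)] by blast
    next
      assume "\<exists>s. \<forall>j. 1 \<le> j \<longrightarrow> j \<le> k + 2 \<longrightarrow> (del (insert v X) j \<in> R \<longleftrightarrow> j \<le> s)"
      then obtain s where s: "\<forall>j. 1 \<le> j \<longrightarrow> j \<le> k + 2 \<longrightarrow> (del (insert v X) j \<in> R \<longleftrightarrow> j \<le> s)" by blast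
      have "\<forall>j. 1 \<le> j \<longrightarrow> j \<le> k + 1 \<longrightarrow> (del X j \<in> RB \<longleftrightarrow> j \<le> s - 1)"
      proof (intro allI impI)
        fix j assume j: "1 \<le> j" "j \<le> k + 1"
        have "del X j \<in> RB \<longleftrightarrow> Suc j \<le> s" using sh[OF j] s j by simp
        moreover have "Suc j \<le> s \<longleftrightarrow> j \<le> s - 1" using j by arith
        ultimately show "del X j \<in> RB \<longleftrightarrow> j \<le> s - 1" by simp
      qed
      then show ?thesis using ps_conv_suffix[OF fX XV2(2)] by blast
    qed
  qed
  show ?thesis unfolding consV_def kk using c1 c2 c3 by blast
qed

lemma con_edges:
  assumes "(Y, Z) \<in> GRV V k p R" "v \<in> Y" "v \<in> Z"
  shows "(Y - {v}, Z - {v}) \<in> GRV V2 (k - 1) p RB"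
  using assms(1) RI
proof (cases rule: edge_cases)
  case (R X i)
  have XV: "X \<subseteq> V" "card X = k + 1" using R(1) by (auto simp: InvV_iff)
  have vX: "v \<in> X" using assms(2) R(5) del_sub by blast
  note vd = vdecomp[OF XV(1) vX XV(2)]
  have "i \<noteq> 1" using R(5) vd(5) assms(2) by auto
  then obtain i' where i': "i = Suc i'" "1 \<le> i'" "i' \<le> k - 1" using R(3,4) by (cases i) auto
  have nv: "\<And>j. v \<notin> del (X - {v}) j" using del_sub by blast
  have "Y - {v} = del (X - {v}) i'" using R(5) vd(6)[of i'] i' nv by simp
  moreover have "Z - {v} = del (X - {v}) (i' + 1)" using R(6) vd(6)[of "i' + 1"] i' nv by simp
  moreover have "X - {v} \<in> RB" using R(2) vX by (simp add: RB_def insert_absorb)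
  ultimately show ?thesis unfolding GRV_alt using i' by blast
next
  case (N X i)
  have XV: "X \<subseteq> V" "card X = k + 1" using N(1) by (auto simp: InvV_iff)
  have vX: "v \<in> X" using assms(2) N(5) del_sub by blast
  note vd = vdecomp[OF XV(1) vX XV(2)]
  have "i \<noteq> 1" using N(6) vd(5) assms(3) by auto
  then obtain i' where i': "i = Suc i'" "1 \<le> i'" "i' \<le> k - 1" using N(3,4) by (cases i) auto
  have nv: "\<And>j. v \<notin> del (X - {v}) j" using del_sub by blast
  have "Y - {v} = del (X - {v}) (i' + 1)" using N(5) vd(6)[of "i' + 1"] i' nv by simp
  moreover have "Z - {v} = del (X - {v}) i'" using N(6) vd(6)[of i'] i' nv by simp
  moreover have "X - {v} \<notin> RB" using N(2) vX by (simp add: RB_def insert_absorb)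
  moreover have "X - {v} \<in> InvV V2 (k - 1 + 1) p"
  proof -
    have "X - {v} \<subseteq> V2" using XV(1) N(1) vd(2) vX by (auto simp: V2_def InvV_iff)
    moreover have "insert v (X - {v}) \<in> InvV V (Suc k) p" using N(1) vd(3) by simp
    ultimately show ?thesis using ins_V2[OF _ vd(1), of k] k1 by simp
  qed
  ultimately show ?thesis unfolding GRV_alt using i' by blast
next
  case (Q X i)
  have vX: "v \<in> X" using assms(2) Q(7) del_sub by (auto split: if_splits)
  note vd = vdecomp[OF Q(1) vX Q(2)]
  have fX: "finite X" using Q(2) card_fin by simp
  have fi: "del X i \<in> InvV V k p" "del X (i+1) \<in> InvV V k p" using facet_mem[OF Q(6)] by auto
  have "v \<in> del X i" using Q(7) assms(2,3) by (auto split: if_splits)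
  then have "i \<noteq> 1" using vd(5) by auto
  then obtain i' where i': "i = Suc i'" "1 \<le> i'" "i' \<le> k - 1" using Q(4,5) by (cases i) auto
  define X' where "X' = X - {v}"
  have nv: "\<And>j. v \<notin> del X' j" using del_sub unfolding X'_def by blast
  have di: "del X i = insert v (del X' i')" "del X (i + 1) = insert v (del X' (i' + 1))"
    using vd(6)[of i'] vd(6)[of "i'+1"] i' unfolding X'_def by auto
  have X'V2: "X' \<subseteq> V2"
  proof
    fix t assume t: "t \<in> X'"
    have "X' = del X' i' \<union> del X' (i' + 1)" using del_union[OF vd(1), of i'] vd(4) i' unfolding X'_def by simp
    then have "t \<in> del X i \<or> t \<in> del X (i + 1)" using t di by auto
    moreover have "v < t" "t \<in> V" "t \<noteq> v" using t vd(2) Q(1) unfolding X'_def by auto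
    ultimately have "p t < p v" using fi di by (auto simp: InvV_iff)
    then show "t \<in> V2" using \<open>t \<in> V\<close> \<open>t \<noteq> v\<close> by (simp add: V2_def)
  qed
  have GX': "\<forall>t\<in>X'. v < t \<and> p t < p v" using X'V2 V2_elts by auto
  have qX': "qinv p X'"
  proof -
    have "{(a, b). a \<in> X' \<and> b \<in> X' \<and> a < b \<and> \<not> p b < p a} = {(a, b). a \<in> X \<and> b \<in> X \<and> a < b \<and> \<not> p b < p a}"
    proof (intro equalityI subsetI)
      fix ab assume "ab \<in> {(a, b). a \<in> X \<and> b \<in> X \<and> a < b \<and> \<not> p b < p a}"
      then obtain a b where ab: "ab = (a, b)" "a \<in> X" "b \<in> X" "a < b" "\<not> p b < p a" by blast
      have "a \<noteq> v"
      proof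
        assume "a = v"
        then have "b \<in> X'" using ab unfolding X'_def by auto
        then show False using GX' ab \<open>a = v\<close> by auto
      qed
      moreover have "b \<noteq> v"
      proof
        assume "b = v"
        have "a \<in> X - {v}" using ab(2) \<open>a \<noteq> v\<close> by simp
        then have "v < a" using vd(2) by blast
        then show False using ab(4) \<open>b = v\<close> by simp
      qed
      ultimately show "ab \<in> {(a, b). a \<in> X' \<and> b \<in> X' \<and> a < b \<and> \<not> p b < p a}"
        using ab unfolding X'_def by auto
    qed (auto simp: X'_def)
    then show ?thesis using Q(3) by (simp add: qinv_def)
  qed
  have fX': "finite X'" "card X' = k - 1 + 1" using vd(1,4) k1 unfolding X'_def by auto
  have memiff: "del X' j \<in> InvV V2 (k - 1) p \<longleftrightarrow> del X (Suc j) \<in> InvV V k p" if "1 \<le> j" "j \<le> k" for j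
  proof -
    have s1: "del X' j \<subseteq> V2" using X'V2 del_sub by blast
    have s2: "finite (del X' j)" using fX'(1) del_sub finite_subset by blast
    have e1: "insert v (del X' j) \<in> InvV V (Suc (k - 1)) p \<longleftrightarrow> del X' j \<in> InvV V2 (k - 1) p"
      by (rule ins_V2[OF s1 s2])
    have e2: "del X (Suc j) = insert v (del X' j)" using vd(6)[OF that] unfolding X'_def .
    have e3: "Suc (k - 1) = k" using k1 by simp
    show ?thesis using e1 e2 e3 by simp
  qed
  have FE: "{del X' j | j. 1 \<le> j \<and> j \<le> k - 1 + 1} \<inter> InvV V2 (k - 1) p = {del X' i', del X' (i' + 1)}"
  proof (intro equalityI subsetI)
    fix S assume "S \<in> {del X' j | j. 1 \<le> j \<and> j \<le> k - 1 + 1} \<inter> InvV V2 (k - 1) p"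
    then obtain j where j: "1 \<le> j" "j \<le> k - 1 + 1" "S = del X' j" "S \<in> InvV V2 (k - 1) p" by blast
    have jk: "j \<le> k" using j(2) k1 by simp
    have m: "del X (Suc j) \<in> InvV V k p" using memiff[OF j(1) jk] j(3,4) by simp
    have r: "1 \<le> Suc j \<and> Suc j \<le> k + 1" using jk by simp
    have "del X (Suc j) \<in> {del X j | j. 1 \<le> j \<and> j \<le> k + 1}" using r by blast
    with m have "del X (Suc j) \<in> {del X j | j. 1 \<le> j \<and> j \<le> k + 1} \<inter> InvV V k p" by blast
    then have "del X (Suc j) \<in> {del X i, del X (i + 1)}" by (simp only: Q(6))
    then have "insert v (del X' j) = insert v (del X' i') \<or> insert v (del X' j) = insert v (del X' (i' + 1))"
      using di vd(6)[OF j(1) jk] unfolding X'_def by blast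
    then have "del X' j = del X' i' \<or> del X' j = del X' (i' + 1)"
      using insert_ident[OF nv nv] by blast
    then show "S \<in> {del X' i', del X' (i' + 1)}" using j(3) by blast
  next
    fix S assume S: "S \<in> {del X' i', del X' (i' + 1)}"
    have i'k: "i' \<le> k" "i' + 1 \<le> k" using i' k1 by simp_all
    have "del X' i' \<in> InvV V2 (k - 1) p" using memiff[OF i'(2) i'k(1)] i'(1) fi(1) by simp
    moreover have "del X' (i' + 1) \<in> InvV V2 (k - 1) p" using memiff[of "i' + 1"] i'k(2) i'(1) fi(2) by simp
    moreover have r1: "1 \<le> i' \<and> i' \<le> k - 1 + 1" "1 \<le> i' + 1 \<and> i' + 1 \<le> k - 1 + 1" using i' k1 by simp_all
    moreover have "del X' i' \<in> {del X' j | j. 1 \<le> j \<and> j \<le> k - 1 + 1}" using r1(1) by blast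
    moreover have "del X' (i' + 1) \<in> {del X' j | j. 1 \<le> j \<and> j \<le> k - 1 + 1}" using r1(2) by blast
    ultimately show "S \<in> {del X' j | j. 1 \<le> j \<and> j \<le> k - 1 + 1} \<inter> InvV V2 (k - 1) p"
      using S by blast
  qed
  have par: "odd (k - 1 - i') = odd (k - i)" using i' by simp
  have sub: "X' \<in> subsetsV V2 (k - 1 + 1)" using X'V2 fX' by (simp add: subsetsV_def)
  have rm: "insert v (del X' i') - {v} = del X' i'" "insert v (del X' (i' + 1)) - {v} = del X' (i' + 1)"
    using nv by simp_all
  have pairs: "if odd (k - 1 - i') then (Y - {v}, Z - {v}) = (del X' i', del X' (i' + 1))
      else (Y - {v}, Z - {v}) = (del X' (i' + 1), del X' i')"
  proof (cases "odd (k - i)")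
    case True
    then have "Y = del X i" "Z = del X (i + 1)" using Q(7) by simp_all
    then show ?thesis using True par di rm by simp
  next
    case False
    then have "Y = del X (i + 1)" "Z = del X i" using Q(7) by simp_all
    then show ?thesis using False par di rm by simp
  qed
  have "(Y - {v}, Z - {v}) \<in> qrelV V2 (k - 1) p"
    by (rule qrelI[OF sub qX' i'(2,3) FE pairs])
  then show ?thesis unfolding GRV_alt by blast
qed

end




lemma GRV_k0: "GRV V 0 p R = {}"
  unfolding GRV_alt qrelV_def by auto

lemma GRV_Vempty: "R \<subseteq> InvV {} (k + 1) p \<Longrightarrow> GRV {} k p R = {}"
  unfolding GRV_alt qrelV_def by (auto simp: subsetsV_def InvV_iff)

lemma main_aux:
  "\<forall>V k R. card V = n \<longrightarrow> finite V \<longrightarrow> consV V k p R \<longrightarrow> acyclic (GRV V k p R)"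
proof (induction n rule: less_induct)
  case (less n)
  show ?case
  proof (intro allI impI)
    fix V k R assume cV: "card V = n" and fin: "finite V" and cons: "consV V k p R"
    have IH: "\<And>V' k' R'. card V' < n \<Longrightarrow> finite V' \<Longrightarrow> consV V' k' p R' \<Longrightarrow> acyclic (GRV V' k' p R')"
      using less.IH by blast
    show "acyclic (GRV V k p R)"
    proof (cases "k = 0 \<or> V = {}")
      case True
      have RI: "R \<subseteq> InvV V (k + 1) p" using cons by (simp add: consV_def)
      have "GRV V k p R = {}"
      proof (cases "k = 0")
        case True then show ?thesis using GRV_k0 by simp
      next
        case False
        then have "V = {}" using \<open>k = 0 \<or> V = {}\<close> by simp
        then show ?thesis using GRV_Vempty RI by simp
      qed
      then show ?thesis by (simp add: acyclic_def)
    next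
      case False
      define v where "v = Min V"
      have vV: "v \<in> V" using False fin by (simp add: v_def)
      have vmin: "v < x" if "x \<in> V" "x \<noteq> v" for x
      proof -
        have "v \<le> x" using Min_le[OF fin that(1)] by (simp add: v_def)
        then show ?thesis using that(2) by simp
      qed
      have k1: "1 \<le> k" using False by simp
      interpret S: step V v p k R
        by unfold_locales (use fin vV vmin cons k1 in auto)
      have c1: "card (V - {v}) < n" using card_Diff1_less[OF fin vV] cV by simp
      have f1: "finite (V - {v})" using fin by simp
      have cc1: "consV (V - {v}) k p {X \<in> R. v \<notin> X}" by (rule del_cons[OF cons])
      have IH1: "acyclic (GRV (V - {v}) k p {X \<in> R. v \<notin> X})" by (rule IH[OF c1 f1 cc1])
      have V2s: "S.V2 \<subset> V" using S.V2_sub vV by (auto simp: S.V2_def)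
      have c2: "card S.V2 < n" using psubset_card_mono[OF fin V2s] cV by simp
      have f2: "finite S.V2" using finite_subset[OF S.V2_sub fin] .
      have IH2: "acyclic (GRV S.V2 (k - 1) p S.RB)" by (rule IH[OF c2 f2 S.con_cons])
      define L where "L Y = (if v \<in> Y then 1 else if S.Dp Y then 0 else (2::nat))" for Y
      show ?thesis
      proof (rule acyclic_layers[where L = L])
        fix Y Z assume e: "(Y, Z) \<in> GRV V k p R"
        show "L Y \<le> L Z"
        proof (cases "v \<in> Y")
          case True
          show ?thesis
          proof (cases "v \<in> Z")
            case True then show ?thesis using \<open>v \<in> Y\<close> by (simp add: L_def)
          next
            case False
            have "\<not> S.Dp Z" by (rule S.crossing2[OF e \<open>v \<in> Y\<close> False])
            then show ?thesis using \<open>v \<in> Y\<close> False by (simp add: L_def)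
          qed
        next
          case False
          show ?thesis
          proof (cases "v \<in> Z")
            case True
            have "S.Dp Y" by (rule S.crossing1[OF e False True])
            then show ?thesis using False by (simp add: L_def)
          next
            case nZ: False
            have "S.Dp Z \<Longrightarrow> S.Dp Y" by (rule S.backward[OF e False nZ])
            then show ?thesis using False nZ by (auto simp: L_def)
          qed
        qed
      next
        fix l
        show "acyclic {(x, y). (x, y) \<in> GRV V k p R \<and> L x = l \<and> L y = l}"
        proof (cases "l = 1")
          case True
          have hom: "((\<lambda>Y. Y - {v}) x, (\<lambda>Y. Y - {v}) y) \<in> GRV S.V2 (k - 1) p S.RB"
            if "(x, y) \<in> {(x, y). (x, y) \<in> GRV V k p R \<and> v \<in> x \<and> v \<in> y}" for x y
          proof -
            have "(x, y) \<in> GRV V k p R" "v \<in> x" "v \<in> y" using that by auto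
            then show ?thesis using S.con_edges by simp
          qed
          have "acyclic {(x, y). (x, y) \<in> GRV V k p R \<and> v \<in> x \<and> v \<in> y}"
            by (rule acyclic_hom[OF IH2 hom])
          moreover have "{(x, y). (x, y) \<in> GRV V k p R \<and> L x = l \<and> L y = l}
              \<subseteq> {(x, y). (x, y) \<in> GRV V k p R \<and> v \<in> x \<and> v \<in> y}"
            using True by (auto simp: L_def split: if_splits)
          ultimately show ?thesis by (rule acyclic_subset)
        next
          case False
          have "{(x, y). (x, y) \<in> GRV V k p R \<and> L x = l \<and> L y = l}
              \<subseteq> GRV (V - {v}) k p {X \<in> R. v \<notin> X}"
          proof (rule subrelI)
            fix x y assume "(x, y) \<in> {(x, y). (x, y) \<in> GRV V k p R \<and> L x = l \<and> L y = l}"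
            then have xy: "(x, y) \<in> GRV V k p R" "L x = l" "L y = l" by auto
            then have "v \<notin> x" "v \<notin> y" using False by (auto simp: L_def)
            then show "(x, y) \<in> GRV (V - {v}) k p {X \<in> R. v \<notin> X}"
              using del_edges[OF xy(1) S.RI] by simp
          qed
          then show ?thesis using IH1 acyclic_subset by blast
        qed
      qed
    qed
  qed
qed

lemma main: "finite V \<Longrightarrow> consV V k p R \<Longrightarrow> acyclic (GRV V k p R)"
  using main_aux by blast

theorem lemma3p11:
  fixes n k :: nat and w :: "nat \<Rightarrow> nat" and R :: "nat set set"
  assumes "1 \<le> n" and "1 \<le> k" and "k \<le> n"
    and "w permutes {1..n}"
    and "consistent n k w R"
  shows "acyclic (GR_edges n k w R)"
proof -
  have "consV {1..n} k (inv w) R" using assms(5) by (simp add: inst_cons)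
  then have "acyclic (GRV {1..n} k (inv w) R)" using main by simp
  then show ?thesis by (simp add: inst_GR)
qed


end
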